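(* The ascending-price auction $G^*$ (defined in the context) is an incentive compatible gradual mechanism implementing the second-price auction rule.
   Context: General framework. Agents $N$ with finite type spaces $\Theta_i$, types inducing complete transitive preferences $R(\theta_i)$ over outcomes; an SCF $f$ maps type profiles to outcomes. A gradual mechanism (GM) implementing $f$ is a finite extensive game form with perfect recall (possibly simultaneous moves, all agents active at the initial history, information sets partitioning each agent's decision nodes, outcome function on terminal histories) in which each action of agent $i$ is a nonempty subset of $\Theta_i$, at each decision node of $i$ the available actions are pairwise disjoint with union equal to the last action of $i$ taken before (or $\Theta_i$ if none), and each terminal history $z$ receives outcome $f(\theta)$ for any $\theta$ in the product $\Theta(z)$ of the agents' last actions along $z$. A strategy $s_i$ is unconditional for $\theta_i$ if it chooses the action containing $\theta_i$ at every decision node of $i$ whose current report contains $\theta_i$. The GM is incentive compatible if for every agent $i$, type $\theta_i$, unconditional strategy $s_{\theta_i}$, strategy $s_i$ and profile $s_{-i}$ of others' strategies, the outcome under $(s_{\theta_i},s_{-i})$ is weakly preferred under $R(\theta_i)$ to that under $(s_i,s_{-i})$. Auction environment. Bidders $N=\{1,\dots,n\}$ ($n\ge2$), each with private value $v_i\in V=\{1,\dots,m\}$ ($m\ge2$), so $\Theta_i=V$. An outcome is a probability distribution over which bidder receives the item together with the price the winner pays; bidder $i$ with value $v_i$ ranks outcomes by expected payoff (probability of winning times $v_i$ minus the price paid upon winning). The second-price auction rule assigns to each value profile $v$ the outcome in which the item goes, with equal probability, to one of the bidders with the highest value, who pays the second-highest entry of $v$ (which equals the highest value if there is a tie at the top).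 Ascending-price auction $G^*$. Price levels $p=1,2,\dots$. At price $p=1$ all bidders are active; at price $p\ge2$ the active bidders are those who chose to stay at $p-1$. At price $p\le m-1$, active bidders move one at a time in increasing index order; each chooses "stay", i.e. the action $\{v\in V:v>p\}$, or "leave", i.e. $\{v\in V:v=p\}$ (their current report is $\{p,\dots,m\}$). After all active bidders have moved at $p$: if exactly one stayed, she wins and pays $p$; if none stayed, a uniformly random bidder among those who left at $p$ wins and pays $p$; if at least two stayed and $p<m-1$, the price rises to $p+1$; if at least two stayed and $p=m-1$, the price reaches $m$, the auction stops, and a uniformly random bidder among those who stayed at $m-1$ wins and pays $m$. Information: when bidder $i$ moves at price $p$, she knows all choices made at all earlier price levels; as to the choices of the bidders who moved before her at price $p$: if at least two of them stayed, she knows exactly their choices; otherwise she knows only that at most one of them stayed. That is, an information set of $i$ is a singleton unless it contains a history in which fewer than two earlier movers at price $p$ stayed, in which case it consists of all histories that coincide with it at all previous price levels and in which fewer than two earlier movers at price $p$ stayed. *)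

theory Defs
  imports "HOL-Probability.Probability_Mass_Function"
begin

text \<open>A history is a finite list of moves; a move is a partial profile of actions
(the agents active at that node each choose an action; an action of agent i is a
set of types of i).\<close>

type_synonym ('i, 't) move = "'i \<Rightarrow> 't set option"
type_synonym ('i, 't) history = "('i, 't) move list"

record ('i, 't, 'o) gform =
  hist :: "('i, 't) history set"
  info :: "'i \<Rightarrow> ('i, 't) history \<Rightarrow> ('i, 't) history set"
  outc :: "('i, 't) history \<Rightarrow> 'o"

definition terminal :: "('i, 't, 'o) gform \<Rightarrow> ('i, 't) history \<Rightarrow> bool" where
  "terminal G h \<longleftrightarrow> h \<in> hist G \<and> (\<forall>a. h @ [a] \<notin> hist G)"

definition active :: "('i, 't, 'o) gform \<Rightarrow> ('i, 't) history \<Rightarrow> 'i set" where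
  "active G h = {i. \<exists>a x. h @ [a] \<in> hist G \<and> a i = Some x}"

definition avail :: "('i, 't, 'o) gform \<Rightarrow> 'i \<Rightarrow> ('i, 't) history \<Rightarrow> 't set set" where
  "avail G i h = {x. \<exists>a. h @ [a] \<in> hist G \<and> a i = Some x}"

definition dnodes :: "('i, 't, 'o) gform \<Rightarrow> 'i \<Rightarrow> ('i, 't) history set" where
  "dnodes G i = {h \<in> hist G. i \<in> active G h}"

definition report :: "('i \<Rightarrow> 't set) \<Rightarrow> 'i \<Rightarrow> ('i, 't) history \<Rightarrow> 't set" where
  "report \<Theta> i h = foldl (\<lambda>r a. case a i of Some x \<Rightarrow> x | None \<Rightarrow> r) (\<Theta> i) h"

text \<open>Experience of agent i along h (information sets visited and actions taken),
used to express perfect recall.\<close>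
definition experience ::
  "('i, 't, 'o) gform \<Rightarrow> 'i \<Rightarrow> ('i, 't) history \<Rightarrow> (('i, 't) history set \<times> 't set option) list" where
  "experience G i h =
     map (\<lambda>k. (info G i (take k h), (h ! k) i)) (filter (\<lambda>k. (h ! k) i \<noteq> None) [0..<length h])"

definition extensive_form :: "'i set \<Rightarrow> ('i, 't, 'o) gform \<Rightarrow> bool" where
  "extensive_form N G \<longleftrightarrow>
     finite (hist G) \<and> [] \<in> hist G \<and>
     (\<forall>h a. h @ [a] \<in> hist G \<longrightarrow> h \<in> hist G) \<and>
     (\<forall>h \<in> hist G. \<not> terminal G h \<longrightarrow>
        active G h \<noteq> {} \<and> active G h \<subseteq> N \<and>
        (\<forall>a. h @ [a] \<in> hist G \<longleftrightarrow>
              (\<forall>i. (i \<in> active G h \<longrightarrow> (\<exists>x \<in> avail G i h. a i = Some x)) \<and>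
                   (i \<notin> active G h \<longrightarrow> a i = None)))) \<and>
     \<not> terminal G [] \<and> active G [] = N \<and>
     (\<forall>i. \<forall>h \<in> dnodes G i.
        h \<in> info G i h \<and> info G i h \<subseteq> dnodes G i \<and>
        (\<forall>h' \<in> info G i h. info G i h' = info G i h \<and> avail G i h' = avail G i h)) \<and>
     (\<forall>i. \<forall>h \<in> dnodes G i. \<forall>h' \<in> info G i h. experience G i h' = experience G i h)"

definition gradual :: "('i \<Rightarrow> 't set) \<Rightarrow> 'i set \<Rightarrow> ('i, 't, 'o) gform \<Rightarrow> bool" where
  "gradual \<Theta> N G \<longleftrightarrow>
     (\<forall>i \<in> N. \<forall>h \<in> dnodes G i.
        (\<forall>x \<in> avail G i h. x \<noteq> {} \<and> x \<subseteq> \<Theta> i) \<and>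
        (\<forall>x \<in> avail G i h. \<forall>y \<in> avail G i h. x \<noteq> y \<longrightarrow> x \<inter> y = {}) \<and>
        \<Union>(avail G i h) = report \<Theta> i h)"

definition implements ::
  "('i \<Rightarrow> 't set) \<Rightarrow> 'i set \<Rightarrow> (('i \<Rightarrow> 't) \<Rightarrow> 'o) \<Rightarrow> ('i, 't, 'o) gform \<Rightarrow> bool" where
  "implements \<Theta> N f G \<longleftrightarrow>
     (\<forall>z. terminal G z \<longrightarrow> (\<forall>\<theta>. (\<forall>i \<in> N. \<theta> i \<in> report \<Theta> i z) \<longrightarrow> outc G z = f \<theta>))"

definition gradual_mechanism ::
  "('i \<Rightarrow> 't set) \<Rightarrow> 'i set \<Rightarrow> (('i \<Rightarrow> 't) \<Rightarrow> 'o) \<Rightarrow> ('i, 't, 'o) gform \<Rightarrow> bool" where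
  "gradual_mechanism \<Theta> N f G \<longleftrightarrow> extensive_form N G \<and> gradual \<Theta> N G \<and> implements \<Theta> N f G"

definition strategy :: "('i, 't, 'o) gform \<Rightarrow> 'i \<Rightarrow> (('i, 't) history \<Rightarrow> 't set) \<Rightarrow> bool" where
  "strategy G i s \<longleftrightarrow>
     (\<forall>h \<in> dnodes G i. s h \<in> avail G i h \<and> (\<forall>h' \<in> info G i h. s h' = s h))"

definition consistent ::
  "('i, 't, 'o) gform \<Rightarrow> ('i \<Rightarrow> ('i, 't) history \<Rightarrow> 't set) \<Rightarrow> ('i, 't) history \<Rightarrow> bool" where
  "consistent G s z \<longleftrightarrow>
     (\<forall>k < length z. z ! k =
        (\<lambda>i. if i \<in> active G (take k z) then Some (s i (take k z)) else None))"

definition play :: "('i, 't, 'o) gform \<Rightarrow> ('i \<Rightarrow> ('i, 't) history \<Rightarrow> 't set) \<Rightarrow> 'o" where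
  "play G s = outc G (THE z. terminal G z \<and> consistent G s z)"

definition unconditional ::
  "('i \<Rightarrow> 't set) \<Rightarrow> ('i, 't, 'o) gform \<Rightarrow> 'i \<Rightarrow> 't \<Rightarrow> (('i, 't) history \<Rightarrow> 't set) \<Rightarrow> bool" where
  "unconditional \<Theta> G i \<theta> s \<longleftrightarrow> (\<forall>h \<in> dnodes G i. \<theta> \<in> report \<Theta> i h \<longrightarrow> \<theta> \<in> s h)"

text \<open>\<open>R i \<theta> x y\<close>: outcome x is weakly preferred to y by agent i of type \<theta>.\<close>
definition incentive_compatible ::
  "('i \<Rightarrow> 't set) \<Rightarrow> 'i set \<Rightarrow> ('i \<Rightarrow> 't \<Rightarrow> 'o \<Rightarrow> 'o \<Rightarrow> bool) \<Rightarrow> ('i, 't, 'o) gform \<Rightarrow> bool" where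
  "incentive_compatible \<Theta> N R G \<longleftrightarrow>
     (\<forall>i \<in> N. \<forall>\<theta> \<in> \<Theta> i. \<forall>s\<theta> si s.
        strategy G i s\<theta> \<longrightarrow> unconditional \<Theta> G i \<theta> s\<theta> \<longrightarrow> strategy G i si \<longrightarrow>
        (\<forall>j \<in> N. strategy G j (s j)) \<longrightarrow>
        R i \<theta> (play G (s(i := s\<theta>))) (play G (s(i := si))))"

text \<open>Outcome: (distribution of the winner, price paid by the winner).\<close>
type_synonym aoutcome = "nat pmf \<times> nat"

definition auction_pref :: "nat \<Rightarrow> nat \<Rightarrow> aoutcome \<Rightarrow> aoutcome \<Rightarrow> bool" where
  "auction_pref i v x y \<longleftrightarrow>
     pmf (fst x) i * (real v - real (snd x)) \<ge> pmf (fst y) i * (real v - real (snd y))"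

definition second_price :: "nat \<Rightarrow> (nat \<Rightarrow> nat) \<Rightarrow> aoutcome" where
  "second_price n v =
     (pmf_of_set {i \<in> {1..n}. v i = Max (v ` {1..n})},
      rev (sort (map v [1..<Suc n])) ! 1)"

datatype gstate = Next nat nat nat \<comment> \<open>mover, price, start offset of current price level\<close>
  | Done "nat pmf" nat

text \<open>State after a sequence of stay(True)/leave(False) decisions, starting at
price p with active bidders A (in increasing order); off counts decisions made at
earlier price levels.\<close>
function lvl :: "nat \<Rightarrow> nat \<Rightarrow> nat \<Rightarrow> nat list \<Rightarrow> bool list \<Rightarrow> gstate" where
  "lvl m p off A bs =
    (if length bs < length A then Next (A ! length bs) p off
     else (let S = map fst (filter snd (zip A bs)); rest = drop (length A) bs in
       if length S = 1 then Done (return_pmf (hd S)) p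
       else if S = [] then Done (pmf_of_set (set A)) p
       else if Suc p < m then lvl m (Suc p) (off + length A) S rest
       else Done (pmf_of_set (set S)) m))"
  by pat_completeness auto
termination by (relation "Wellfounded.measure (\<lambda>(m, p, off, A, bs). m - p)") auto

definition gst :: "nat \<Rightarrow> nat \<Rightarrow> bool list \<Rightarrow> gstate" where
  "gst n m bs = lvl m 1 0 [1..<Suc n] bs"

definition gmove :: "nat \<Rightarrow> nat \<Rightarrow> bool list \<Rightarrow> nat \<Rightarrow> (nat, nat) move" where
  "gmove n m bs k =
     (case gst n m (take k bs) of
        Next i p off \<Rightarrow> (\<lambda>j. if j = i then Some (if bs ! k then {p<..m} else {p}) else None)
      | Done _ _ \<Rightarrow> (\<lambda>_. None))"

text \<open>Trivial initial simultaneous move (each bidder reports V), so that all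
agents are active at the initial history.\<close>
definition ginit :: "nat \<Rightarrow> nat \<Rightarrow> (nat, nat) move" where
  "ginit n m = (\<lambda>j. if j \<in> {1..n} then Some {1..m} else None)"

definition ghist :: "nat \<Rightarrow> nat \<Rightarrow> bool list \<Rightarrow> (nat, nat) history" where
  "ghist n m bs = ginit n m # map (gmove n m bs) [0..<length bs]"

definition gvalid :: "nat \<Rightarrow> nat \<Rightarrow> bool list \<Rightarrow> bool" where
  "gvalid n m bs \<longleftrightarrow> (\<forall>k < length bs. \<exists>i p off. gst n m (take k bs) = Next i p off)"

definition gdec :: "nat \<Rightarrow> nat \<Rightarrow> (nat, nat) history \<Rightarrow> bool list" where
  "gdec n m h = (SOME bs. gvalid n m bs \<and> ghist n m bs = h)"

definition nstay :: "bool list \<Rightarrow> nat" where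
  "nstay bs = length (filter id bs)"

definition Gstar_info :: "nat \<Rightarrow> nat \<Rightarrow> nat \<Rightarrow> (nat, nat) history \<Rightarrow> (nat, nat) history set" where
  "Gstar_info n m i h =
     (if h = [] then {[]} else
      (case gst n m (gdec n m h) of
         Next j p off \<Rightarrow>
           ghist n m ` {bs'. gvalid n m bs' \<and> gst n m bs' = Next i p off \<and>
              take off bs' = take off (gdec n m h) \<and>
              (if 2 \<le> nstay (drop off (gdec n m h))
               then drop off bs' = drop off (gdec n m h)
               else nstay (drop off bs') < 2)}
       | Done _ _ \<Rightarrow> {h}))"

definition Gstar_outc :: "nat \<Rightarrow> nat \<Rightarrow> (nat, nat) history \<Rightarrow> aoutcome" where
  "Gstar_outc n m h =
     (case gst n m (gdec n m h) of Done W p \<Rightarrow> (W, p) | Next _ _ _ \<Rightarrow> (return_pmf 0, 0))"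

definition Gstar :: "nat \<Rightarrow> nat \<Rightarrow> (nat, nat, aoutcome) gform" where
  "Gstar n m = \<lparr> hist = insert [] (ghist n m ` {bs. gvalid n m bs}),
                 info = Gstar_info n m,
                 outc = Gstar_outc n m \<rparr>"

end

theory Submission
  imports Defs
begin

declare lvl.simps[simp del]

definition act :: "nat \<Rightarrow> nat \<Rightarrow> bool \<Rightarrow> nat set" where
  "act m p b = (if b then {p<..m} else {p})"

datatype lstate = Lev nat "nat list" "bool list" nat | Fin "nat pmf" nat

fun stp :: "nat \<Rightarrow> lstate \<Rightarrow> bool \<Rightarrow> lstate" where
  "stp m (Lev p A ys off) b = (let ys' = ys @ [b] in
     if length ys' < length A then Lev p A ys' off else
     (let S = map fst (filter snd (zip A ys')) in
      if length S = 1 then Fin (return_pmf (hd S)) p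
      else if S = [] then Fin (pmf_of_set (set A)) p
      else if Suc p < m then Lev (Suc p) S [] (off + length A)
      else Fin (pmf_of_set (set S)) m))"
| "stp m (Fin W p) b = Fin W p"

fun absst :: "lstate \<Rightarrow> gstate" where
  "absst (Lev p A ys off) = Next (A ! length ys) p off"
| "absst (Fin W p) = Done W p"

lemma foldl_Fin[simp]: "foldl (stp m) (Fin W p) bs = Fin W p"
  by (induction bs) auto

lemma lvl_st:
  "length ys < length A \<Longrightarrow> lvl m p off A (ys @ bs) = absst (foldl (stp m) (Lev p A ys off) bs)"
proof (induction bs arbitrary: ys p A off)
  case Nil
  then show ?case by (subst lvl.simps) simp
next
  case (Cons b bs)
  show ?case
  proof (cases "length (ys @ [b]) < length A")
    case True
    then show ?thesis using Cons.IH[of "ys @ [b]" A p off] by simp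
  next
    case False
    with Cons.prems have len: "length (ys @ [b]) = length A" by simp
    have z: "zip A (ys @ b # bs) = zip A (ys @ [b])"
    proof -
      have "ys @ b # bs = (ys @ [b]) @ bs" by simp
      then show ?thesis using len by (simp only: zip_append2) simp
    qed
    define S where "S = map fst (filter snd (zip A (ys @ [b])))"
    have dr: "drop (length A) (ys @ b # bs) = bs" using len
      by (metis append_Cons append_Nil append_assoc append_eq_conv_conj)
    have L: "lvl m p off A (ys @ b # bs) =
      (if length S = 1 then Done (return_pmf (hd S)) p
       else if S = [] then Done (pmf_of_set (set A)) p
       else if Suc p < m then lvl m (Suc p) (off + length A) S bs
       else Done (pmf_of_set (set S)) m)"
      apply (subst lvl.simps)
      using len z dr by (simp add: S_def Let_def)
    show ?thesis
    proof (cases "length S = 1 \<or> S = [] \<or> \<not> Suc p < m")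
      case True
      then show ?thesis using L len False by (auto simp: S_def Let_def)
    next
      case F2: False
      then have "length ([]::bool list) < length S" by auto
      from Cons.IH[of "[]" S "Suc p" "off + length A", OF this]
      show ?thesis using L len False F2 by (simp add: S_def Let_def)
    qed
  qed
qed

definition st :: "nat \<Rightarrow> nat \<Rightarrow> bool list \<Rightarrow> lstate" where
  "st n m bs = foldl (stp m) (Lev 1 [1..<Suc n] [] 0) bs"

lemma gst_st: "n \<ge> 1 \<Longrightarrow> gst n m bs = absst (st n m bs)"
  unfolding gst_def st_def using lvl_st[of "[]" "[1..<Suc n]" m 1 0 bs] by simp

lemma st_snoc: "st n m (bs @ [b]) = stp m (st n m bs) b"
  by (simp add: st_def)

lemma st_append: "st n m (bs @ cs) = foldl (stp m) (st n m bs) cs"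
  by (simp add: st_def)


definition lmove :: "nat \<Rightarrow> nat \<Rightarrow> bool list \<Rightarrow> bool \<Rightarrow> (nat, nat) move" where
  "lmove n m bs b = (case gst n m bs of Next i p off \<Rightarrow> (\<lambda>j. if j = i then Some (act m p b) else None)
      | Done _ _ \<Rightarrow> (\<lambda>_. None))"

lemma gmove_snoc: "k < length bs \<Longrightarrow> gmove n m (bs @ [b]) k = gmove n m bs k"
  by (cases "gst n m (take k bs)") (auto simp: gmove_def nth_append)

lemma gmove_last: "gmove n m (bs @ [b]) (length bs) = lmove n m bs b"
  by (cases "gst n m bs") (auto simp: gmove_def lmove_def act_def)

lemma ghist_snoc: "ghist n m (bs @ [b]) = ghist n m bs @ [lmove n m bs b]"
proof -
  have "map (gmove n m (bs @ [b])) [0..<length bs] = map (gmove n m bs) [0..<length bs]"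
    by (rule map_cong) (auto simp: gmove_snoc)
  then show ?thesis by (simp add: ghist_def gmove_last)
qed

lemma ghist_length[simp]: "length (ghist n m bs) = Suc (length bs)"
  by (simp add: ghist_def)

lemma ghist_nth0[simp]: "ghist n m bs ! 0 = ginit n m"
  by (simp add: ghist_def)

lemma ghist_nth_Suc: "k < length bs \<Longrightarrow> ghist n m bs ! Suc k = gmove n m bs k"
  by (simp add: ghist_def)

lemma gmove_take: "k < j \<Longrightarrow> gmove n m (take j bs) k = gmove n m bs k"
  by (cases "gst n m (take k bs)") (auto simp: gmove_def min_def)

lemma ghist_take: "k \<le> length bs \<Longrightarrow> take (Suc k) (ghist n m bs) = ghist n m (take k bs)"
proof -
  assume k: "k \<le> length bs"
  have "map (gmove n m bs) [0..<k] = map (gmove n m (take k bs)) [0..<k]"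
    by (rule map_cong) (auto simp: gmove_take)
  then show ?thesis using k by (simp add: ghist_def take_map min_def)
qed

lemma report_snoc: "report \<Theta> j (h @ [a]) = (case a j of Some x \<Rightarrow> x | None \<Rightarrow> report \<Theta> j h)"
  by (cases "a j") (simp_all add: report_def)

lemma report_ghist_Nil: "report (\<lambda>_. {1..m}) j (ghist n m []) = {1..m}"
  by (simp add: report_def ghist_def ginit_def)

definition isLev :: "lstate \<Rightarrow> bool" where
  "isLev s = (case s of Lev _ _ _ _ \<Rightarrow> True | Fin _ _ \<Rightarrow> False)"

lemma gst_Next_iff: "n \<ge> 1 \<Longrightarrow> (\<exists>i p off. gst n m bs = Next i p off) \<longleftrightarrow> isLev (st n m bs)"
  by (cases "st n m bs") (auto simp: gst_st isLev_def)

lemma gvalid_Nil[simp]: "gvalid n m []"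
  by (simp add: gvalid_def)

lemma gvalid_snoc: "n \<ge> 1 \<Longrightarrow> gvalid n m (bs @ [b]) \<longleftrightarrow> gvalid n m bs \<and> isLev (st n m bs)"
  unfolding gvalid_def
  apply (auto simp: nth_append gst_Next_iff[symmetric] less_Suc_eq)
  done

lemma gvalid_take: "gvalid n m bs \<Longrightarrow> gvalid n m (take k bs)"
  by (auto simp: gvalid_def min_def)

lemma lmove_Lev: "n \<ge> 1 \<Longrightarrow> st n m bs = Lev p A ys off \<Longrightarrow>
   lmove n m bs b = (\<lambda>j. if j = A ! length ys then Some (act m p b) else None)"
  by (simp add: lmove_def gst_st)

abbreviation RPT :: "nat \<Rightarrow> nat \<Rightarrow> nat \<Rightarrow> bool list \<Rightarrow> nat set" where
  "RPT n m j bs \<equiv> report (\<lambda>_. {1..m}) j (ghist n m bs)"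

lemma RPT_snoc_Lev: "n \<ge> 1 \<Longrightarrow> st n m bs = Lev p A ys off \<Longrightarrow>
   RPT n m j (bs @ [b]) = (if j = A ! length ys then act m p b else RPT n m j bs)"
  by (simp add: ghist_snoc report_snoc lmove_Lev)

lemma set_stayers: "set (map fst (filter snd (zip A ys))) = {A ! k | k. k < length A \<and> k < length ys \<and> ys ! k}"
  by (auto simp: set_zip image_iff) (metis fst_conv snd_conv)

lemma distinct_stayers: "distinct A \<Longrightarrow> distinct (map fst (filter snd (zip A ys)))"
proof (induction A arbitrary: ys)
  case Nil then show ?case by simp
next
  case (Cons a A)
  then show ?case
    by (cases ys) (auto dest: set_zip_leftD)
qed


definition linv :: "nat \<Rightarrow> nat \<Rightarrow> bool list \<Rightarrow> nat \<Rightarrow> nat list \<Rightarrow> bool list \<Rightarrow> nat \<Rightarrow> bool" where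
  "linv n m bs p A ys off \<longleftrightarrow> 1 \<le> p \<and> p < m \<and> distinct A \<and> set A \<subseteq> {1..n} \<and> 2 \<le> length A \<and>
     length ys < length A \<and> off + length ys = length bs \<and> ys = drop off bs \<and> off \<le> (p - 1) * n \<and>
     st n m (take off bs) = Lev p A [] off \<and>
     (\<forall>k<length A. RPT n m (A ! k) bs = (if k < length ys then act m p (ys ! k) else {p..m})) \<and>
     (\<forall>j\<in>{1..n}. j \<notin> set A \<longrightarrow> (\<exists>q. 1 \<le> q \<and> q < p \<and> RPT n m j bs = {q}))"

lemma RPT_after:
  assumes n: "n \<ge> 1" and L: "st n m bs = Lev p A ys off" and I: "linv n m bs p A ys off"
  shows "\<forall>k<length A. RPT n m (A ! k) (bs @ [b]) =
            (if k \<le> length ys then act m p ((ys @ [b]) ! k) else {p..m})"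
    and "\<forall>j. j \<notin> set A \<longrightarrow> RPT n m j (bs @ [b]) = RPT n m j bs"
proof -
  from I have d: "distinct A" and ly: "length ys < length A" by (auto simp: linv_def)
  show "\<forall>k<length A. RPT n m (A ! k) (bs @ [b]) =
            (if k \<le> length ys then act m p ((ys @ [b]) ! k) else {p..m})"
  proof (intro allI impI)
    fix k assume k: "k < length A"
    have eq: "A ! k = A ! length ys \<longleftrightarrow> k = length ys" using d k ly nth_eq_iff_index_eq by blast
    show "RPT n m (A ! k) (bs @ [b]) = (if k \<le> length ys then act m p ((ys @ [b]) ! k) else {p..m})"
      using RPT_snoc_Lev[OF n L, of "A ! k" b] eq I k
      by (auto simp: linv_def nth_append)
  qed
  show "\<forall>j. j \<notin> set A \<longrightarrow> RPT n m j (bs @ [b]) = RPT n m j bs"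
    using RPT_snoc_Lev[OF n L] ly by auto
qed

lemma linv_init: "n \<ge> 2 \<Longrightarrow> m \<ge> 2 \<Longrightarrow> linv n m [] 1 [1..<Suc n] [] 0"
proof -
  assume a: "n \<ge> 2" "m \<ge> 2"
  have r: "\<forall>k<length [1..<Suc n]. RPT n m ([1..<Suc n] ! k) [] = (if k < length ([]::bool list) then act m 1 ([] ! k) else {1..m})"
    by (simp only: report_ghist_Nil) simp
  have s: "st n m (take 0 []) = Lev 1 [1..<Suc n] [] 0" by (simp add: st_def)
  show ?thesis unfolding linv_def using a r s by auto
qed

lemma linv_step:
  assumes n: "n \<ge> 2" and L: "st n m bs = Lev p A ys off" and I: "linv n m bs p A ys off"
    and L2: "st n m (bs @ [b]) = Lev p' A' ys' off'"
  shows "linv n m (bs @ [b]) p' A' ys' off'"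
proof -
  have n1: "n \<ge> 1" using n by simp
  note RA = RPT_after[OF n1 L I, of b]
  from I have I1: "1 \<le> p" "p < m" "distinct A" "set A \<subseteq> {1..n}" "2 \<le> length A"
     "length ys < length A" "off + length ys = length bs" "ys = drop off bs" "off \<le> (p - 1) * n"
     "st n m (take off bs) = Lev p A [] off"
     "\<forall>j\<in>{1..n}. j \<notin> set A \<longrightarrow> (\<exists>q. 1 \<le> q \<and> q < p \<and> RPT n m j bs = {q})"
    by (auto simp: linv_def)
  have S2: "stp m (Lev p A ys off) b = Lev p' A' ys' off'" using L2 L by (simp add: st_snoc)
  show ?thesis
  proof (cases "length (ys @ [b]) < length A")
    case True
    then have e: "p' = p" "A' = A" "ys' = ys @ [b]" "off' = off" using S2 by (auto simp: Let_def)
    have offle: "off \<le> length bs" using I1 by simp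
    show ?thesis unfolding linv_def e
      using I1 True RA offle by (auto simp: nth_append)
  next
    case False
    define S where "S = map fst (filter snd (zip A (ys @ [b])))"
    have len: "length (ys @ [b]) = length A" using False I1 by simp
    have c: "length S \<noteq> 1" "S \<noteq> []" "Suc p < m" and e: "p' = Suc p" "A' = S" "ys' = []" "off' = off + length A"
      using S2 False by (auto simp: Let_def S_def split: if_splits)
    have dS: "distinct S" unfolding S_def using distinct_stayers I1 by blast
    have lS: "2 \<le> length S" using c by (cases S) (auto simp: Suc_le_eq)
    have setS: "set S = {A ! k | k. k < length A \<and> (ys @ [b]) ! k}"
      unfolding S_def set_stayers using len by auto
    have offe: "off + length A = length (bs @ [b])" using I1 len by simp
    have lAn: "length A \<le> n" using I1 distinct_card[of A] card_mono[of "{1..n}" "set A"] by simp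
    have offb: "off + length A \<le> (Suc p - 1) * n" using I1 lAn by (cases p) auto
    have stake: "st n m (take (off + length A) (bs @ [b])) = Lev (Suc p) S [] (off + length A)"
      using offe L2 e by simp
    have r1: "\<forall>k<length S. RPT n m (S ! k) (bs @ [b]) = {Suc p..m}"
    proof (intro allI impI)
      fix k assume "k < length S"
      then have "S ! k \<in> set S" by simp
      then obtain k' where k': "k' < length A" "(ys @ [b]) ! k'" "S ! k = A ! k'" using setS by auto
      have "k' \<le> length ys" using k' len by simp
      then show "RPT n m (S ! k) (bs @ [b]) = {Suc p..m}"
        using RA(1) k' by (auto simp: act_def)
    qed
    have r2: "\<forall>j\<in>{1..n}. j \<notin> set S \<longrightarrow> (\<exists>q. 1 \<le> q \<and> q < Suc p \<and> RPT n m j (bs @ [b]) = {q})"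
    proof (intro ballI impI)
      fix j assume j: "j \<in> {1..n}" "j \<notin> set S"
      show "\<exists>q. 1 \<le> q \<and> q < Suc p \<and> RPT n m j (bs @ [b]) = {q}"
      proof (cases "j \<in> set A")
        case True
        then obtain k' where k': "k' < length A" "j = A ! k'" by (auto simp: in_set_conv_nth)
        then have "\<not> (ys @ [b]) ! k'" using j setS by auto
        moreover have "k' \<le> length ys" using k' len by simp
        ultimately have "RPT n m j (bs @ [b]) = {p}" using RA(1) k' by (auto simp: act_def)
        then show ?thesis using I1 by auto
      next
        case False
        then show ?thesis using RA(2) I1 j by force
      qed
    qed
    show ?thesis unfolding linv_def e
      using I1 c dS lS stake r1 r2 offe setS offb by auto
  qed
qed

lemma linv:
  assumes n: "n \<ge> 2" and m: "m \<ge> 2"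
  shows "gvalid n m bs \<Longrightarrow> st n m bs = Lev p A ys off \<Longrightarrow> linv n m bs p A ys off"
proof (induction bs arbitrary: p A ys off rule: rev_induct)
  case Nil
  then have "Lev 1 [1..<Suc n] [] 0 = Lev p A ys off" by (metis foldl_Nil st_def)
  then have "p = 1" "A = [1..<Suc n]" "ys = []" "off = 0" by (auto simp del: upt_Suc)
  then show ?case using linv_init[OF n m] by simp
next
  case (snoc b bs)
  have n1: "n \<ge> 1" using n by simp
  from snoc.prems(1) have v: "gvalid n m bs" and "isLev (st n m bs)" using gvalid_snoc[OF n1] by auto
  then obtain p0 A0 ys0 off0 where L0: "st n m bs = Lev p0 A0 ys0 off0"
    by (cases "st n m bs") (auto simp: isLev_def)
  show ?case using linv_step[OF n L0 snoc.IH[OF v L0] snoc.prems(2)] .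
qed

lemma linv_len: "linv n m bs p A ys off \<Longrightarrow> length bs < m * n"
proof -
  assume I: "linv n m bs p A ys off"
  then have "off \<le> (p - 1) * n" "off + length ys = length bs" "length ys < length A" "p < m"
    "distinct A" "set A \<subseteq> {1..n}" by (auto simp: linv_def)
  moreover have "length A \<le> n" using calculation distinct_card[of A] card_mono[of "{1..n}" "set A"] by simp
  ultimately have "length bs < (p - 1) * n + n" by linarith
  also have "\<dots> = p * n" using \<open>off \<le> _\<close> I by (cases p) (auto simp: linv_def)
  also have "\<dots> \<le> m * n" using \<open>p < m\<close> by simp
  finally show ?thesis .
qed

lemma gvalid_len:
  assumes n: "n \<ge> 2" and m: "m \<ge> 2" and v: "gvalid n m bs"
  shows "length bs \<le> m * n"
proof (cases bs rule: rev_cases)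
  case Nil then show ?thesis by simp
next
  case (snoc bs0 b)
  have n1: "n \<ge> 1" using n by simp
  from v snoc have v0: "gvalid n m bs0" "isLev (st n m bs0)" using gvalid_snoc[OF n1] by auto
  then obtain p A ys off where L: "st n m bs0 = Lev p A ys off" by (cases "st n m bs0") (auto simp: isLev_def)
  have "length bs0 < m * n" using linv_len[OF linv[OF n m v0(1) L]] .
  then show ?thesis using snoc by simp
qed

lemma Lev_inj: "n \<ge> 1 \<Longrightarrow> gvalid n m bs \<Longrightarrow> k < length bs \<Longrightarrow> isLev (st n m (take k bs))"
  by (auto simp: gvalid_def gst_Next_iff[symmetric])

lemma ghist_inj:
  assumes n: "n \<ge> 1" and v: "gvalid n m bs" "gvalid n m bs'" and e: "ghist n m bs = ghist n m bs'"
  shows "bs = bs'"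
proof -
  have l: "length bs = length bs'" using arg_cong[OF e, of length] by simp
  have "\<forall>k<length bs. bs ! k = bs' ! k"
  proof (intro allI impI)
    fix k
    show "k < length bs \<Longrightarrow> bs ! k = bs' ! k"
    proof (induction k rule: less_induct)
      case (less k)
      have tk: "take k bs = take k bs'" using less l by (intro nth_equalityI) auto
      have "ghist n m bs ! Suc k = ghist n m bs' ! Suc k" using e by simp
      then have g: "gmove n m bs k = gmove n m bs' k" using less l by (simp add: ghist_nth_Suc)
      obtain i p off where N: "gst n m (take k bs) = Next i p off" using v(1) less by (auto simp: gvalid_def)
      have "gmove n m bs k i = gmove n m bs' k i" using g by simp
      then have "(if bs ! k then {p<..m} else {p}) = (if bs' ! k then {p<..m} else {p})"
        using N tk by (simp add: gmove_def)
      then show ?case by (auto split: if_splits)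
    qed
  qed
  then show ?thesis using l by (intro nth_equalityI) auto
qed

lemma gdec_ghist: "n \<ge> 1 \<Longrightarrow> gvalid n m bs \<Longrightarrow> gdec n m (ghist n m bs) = bs"
  unfolding gdec_def
  by (rule some_equality) (auto intro: ghist_inj)

lemma ghist_ne[simp]: "ghist n m bs \<noteq> []"
  by (simp add: ghist_def)

lemma hist_G: "h \<in> hist (Gstar n m) \<longleftrightarrow> h = [] \<or> (\<exists>bs. gvalid n m bs \<and> h = ghist n m bs)"
  by (auto simp: Gstar_def)

lemma ext_Nil: "[a] \<in> hist (Gstar n m) \<longleftrightarrow> a = ginit n m"
proof
  assume "[a] \<in> hist (Gstar n m)"
  then obtain bs where "[a] = ghist n m bs" by (auto simp: hist_G)
  then show "a = ginit n m" by (cases bs) (auto simp: ghist_def)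
next
  assume "a = ginit n m"
  then have "[a] = ghist n m []" by (simp add: ghist_def)
  then show "[a] \<in> hist (Gstar n m)" unfolding hist_G using gvalid_Nil by blast
qed

lemma ext_ghist:
  assumes n: "n \<ge> 1" and v: "gvalid n m bs"
  shows "ghist n m bs @ [a] \<in> hist (Gstar n m) \<longleftrightarrow> isLev (st n m bs) \<and> (\<exists>b. a = lmove n m bs b)"
proof
  assume "ghist n m bs @ [a] \<in> hist (Gstar n m)"
  then obtain bs' where v': "gvalid n m bs'" and e: "ghist n m bs @ [a] = ghist n m bs'"
    by (auto simp: hist_G)
  have "bs' \<noteq> []" using arg_cong[OF e, of length] by auto
  then obtain bs0 b where bs': "bs' = bs0 @ [b]" by (cases bs' rule: rev_cases) auto
  from v' bs' have v0: "gvalid n m bs0" "isLev (st n m bs0)" using gvalid_snoc[OF n] by auto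
  have "ghist n m bs @ [a] = ghist n m bs0 @ [lmove n m bs0 b]" using e bs' by (simp add: ghist_snoc)
  then have "ghist n m bs = ghist n m bs0" "a = lmove n m bs0 b" by auto
  then have "bs = bs0" "a = lmove n m bs0 b" using ghist_inj[OF n v v0(1)] by auto
  then show "isLev (st n m bs) \<and> (\<exists>b. a = lmove n m bs b)" using v0 by auto
next
  assume "isLev (st n m bs) \<and> (\<exists>b. a = lmove n m bs b)"
  then obtain b where "isLev (st n m bs)" "a = lmove n m bs b" by auto
  then have "gvalid n m (bs @ [b])" "ghist n m (bs @ [b]) = ghist n m bs @ [a]"
    using v gvalid_snoc[OF n] by (auto simp: ghist_snoc)
  then show "ghist n m bs @ [a] \<in> hist (Gstar n m)" unfolding hist_G by metis
qed

lemma lmove_Lev_some: "n \<ge> 1 \<Longrightarrow> st n m bs = Lev p A ys off \<Longrightarrow> lmove n m bs b j = Some x \<longleftrightarrow> j = A ! length ys \<and> x = act m p b"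
  by (auto simp: lmove_Lev)

lemma active_Nil: "active (Gstar n m) [] = {1..n}"
  by (auto simp: active_def ext_Nil ginit_def)

lemma avail_Nil: "i \<in> {1..n} \<Longrightarrow> avail (Gstar n m) i [] = {{1..m}}"
  by (auto simp: avail_def ext_Nil ginit_def)

lemma active_Lev: "n \<ge> 1 \<Longrightarrow> gvalid n m bs \<Longrightarrow> st n m bs = Lev p A ys off \<Longrightarrow>
    active (Gstar n m) (ghist n m bs) = {A ! length ys}"
  unfolding active_def using ext_ghist[of n m bs]
  by (auto simp: isLev_def lmove_Lev split: if_splits)

lemma active_Fin: "n \<ge> 1 \<Longrightarrow> gvalid n m bs \<Longrightarrow> st n m bs = Fin W q \<Longrightarrow>
    active (Gstar n m) (ghist n m bs) = {}"
  unfolding active_def using ext_ghist[of n m bs]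
  by (auto simp: isLev_def)

lemma avail_Lev: "n \<ge> 1 \<Longrightarrow> gvalid n m bs \<Longrightarrow> st n m bs = Lev p A ys off \<Longrightarrow>
    avail (Gstar n m) (A ! length ys) (ghist n m bs) = {{p<..m}, {p}}"
proof -
  assume a: "n \<ge> 1" "gvalid n m bs" "st n m bs = Lev p A ys off"
  have "avail (Gstar n m) (A ! length ys) (ghist n m bs) = {x. \<exists>b. x = act m p b}"
    unfolding avail_def using ext_ghist[of n m bs] a
    by (auto simp: isLev_def lmove_Lev split: if_splits)
  also have "\<dots> = {act m p True, act m p False}"
  proof -
    have "\<And>x. (\<exists>b. x = act m p b) \<longleftrightarrow> x = act m p True \<or> x = act m p False" by (metis (full_types))
    then show ?thesis by blast
  qed
  finally show ?thesis by (simp add: act_def)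
qed

lemma terminal_iff: "n \<ge> 1 \<Longrightarrow> terminal (Gstar n m) h \<longleftrightarrow>
    (\<exists>bs W q. gvalid n m bs \<and> h = ghist n m bs \<and> st n m bs = Fin W q)"
proof
  assume n: "n \<ge> 1" and t: "terminal (Gstar n m) h"
  then have h: "h \<in> hist (Gstar n m)" and na: "\<forall>a. h @ [a] \<notin> hist (Gstar n m)" by (auto simp: terminal_def)
  have "h \<noteq> []" using na ext_Nil by auto
  then obtain bs where v: "gvalid n m bs" and e: "h = ghist n m bs" using h by (auto simp: hist_G)
  have "\<not> isLev (st n m bs)" using na ext_ghist[OF n v] e by auto
  then show "\<exists>bs W q. gvalid n m bs \<and> h = ghist n m bs \<and> st n m bs = Fin W q"
    using v e by (cases "st n m bs") (auto simp: isLev_def)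
next
  assume n: "n \<ge> 1" and "\<exists>bs W q. gvalid n m bs \<and> h = ghist n m bs \<and> st n m bs = Fin W q"
  then obtain bs W q where "gvalid n m bs" "h = ghist n m bs" "st n m bs = Fin W q" by auto
  then show "terminal (Gstar n m) h" using ext_ghist[OF n] unfolding terminal_def hist_G
    by (auto simp: isLev_def)
qed


lemma foldl_lev: "length (xs @ zs) < length A \<Longrightarrow> foldl (stp m) (Lev p A xs off) zs = Lev p A (xs @ zs) off"
  by (induction zs arbitrary: xs) (auto simp: Let_def)

lemma lev_prefix:
  assumes I: "linv n m bs p A ys off" and k: "off \<le> k" "k \<le> length bs"
  shows "st n m (take k bs) = Lev p A (take (k - off) ys) off"
proof -
  from I have t: "st n m (take off bs) = Lev p A [] off" and ys: "ys = drop off bs" and l: "length ys < length A"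
    by (auto simp: linv_def)
  have "take k bs = take off bs @ take (k - off) ys" using k ys
    by (metis le_add_diff_inverse take_add)
  then have "st n m (take k bs) = foldl (stp m) (Lev p A [] off) (take (k - off) ys)"
    using t by (simp add: st_append)
  also have "\<dots> = Lev p A (take (k - off) ys) off" using l by (subst foldl_lev) auto
  finally show ?thesis .
qed

lemma dnodes_iff:
  assumes n: "n \<ge> 1"
  shows "h \<in> dnodes (Gstar n m) i \<longleftrightarrow> (h = [] \<and> i \<in> {1..n}) \<or>
    (\<exists>bs p A ys off. gvalid n m bs \<and> h = ghist n m bs \<and> st n m bs = Lev p A ys off \<and> i = A ! length ys)"
proof
  assume "h \<in> dnodes (Gstar n m) i"
  then have h: "h \<in> hist (Gstar n m)" and a: "i \<in> active (Gstar n m) h" by (auto simp: dnodes_def)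
  show "(h = [] \<and> i \<in> {1..n}) \<or>
    (\<exists>bs p A ys off. gvalid n m bs \<and> h = ghist n m bs \<and> st n m bs = Lev p A ys off \<and> i = A ! length ys)"
  proof (cases "h = []")
    case True then show ?thesis using a active_Nil by auto
  next
    case False
    then obtain bs where v: "gvalid n m bs" and e: "h = ghist n m bs" using h by (auto simp: hist_G)
    show ?thesis
    proof (cases "st n m bs")
      case (Lev p A ys off)
      then show ?thesis using active_Lev[OF n v Lev] a e v by auto
    next
      case (Fin W q)
      then show ?thesis using active_Fin[OF n v Fin] a e by auto
    qed
  qed
next
  assume "(h = [] \<and> i \<in> {1..n}) \<or>
    (\<exists>bs p A ys off. gvalid n m bs \<and> h = ghist n m bs \<and> st n m bs = Lev p A ys off \<and> i = A ! length ys)"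
  then show "h \<in> dnodes (Gstar n m) i"
    unfolding dnodes_def using active_Nil active_Lev[OF n] by (auto simp: hist_G)
qed

definition iset :: "nat \<Rightarrow> nat \<Rightarrow> bool list \<Rightarrow> nat \<Rightarrow> nat \<Rightarrow> nat \<Rightarrow> bool list set" where
  "iset n m bs i p off = {bs'. gvalid n m bs' \<and> gst n m bs' = Next i p off \<and>
              take off bs' = take off bs \<and>
              (if 2 \<le> nstay (drop off bs)
               then drop off bs' = drop off bs
               else nstay (drop off bs') < 2)}"

lemma info_ghist: "n \<ge> 1 \<Longrightarrow> gvalid n m bs \<Longrightarrow> st n m bs = Lev p A ys off \<Longrightarrow>
   info (Gstar n m) i (ghist n m bs) = ghist n m ` iset n m bs i p off"
  by (simp add: Gstar_def Gstar_info_def gdec_ghist gst_st iset_def)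

lemma iset_char:
  assumes n: "n \<ge> 2" and m: "m \<ge> 2" and v: "gvalid n m bs" and L: "st n m bs = Lev p A ys off"
    and b': "bs' \<in> iset n m bs (A ! length ys) p off"
  shows "\<exists>ys'. st n m bs' = Lev p A ys' off \<and> length ys' = length ys \<and> gvalid n m bs' \<and>
           bs' = take off bs @ ys' \<and> linv n m bs' p A ys' off"
proof -
  have n1: "n \<ge> 1" using n by simp
  from b' have v': "gvalid n m bs'" and g': "gst n m bs' = Next (A ! length ys) p off"
    and tk: "take off bs' = take off bs" by (auto simp: iset_def)
  obtain p2 A2 ys2 off2 where L2: "st n m bs' = Lev p2 A2 ys2 off2"
    using g' gst_st[OF n1] by (cases "st n m bs'") auto
  have e: "A2 ! length ys2 = A ! length ys" "p2 = p" "off2 = off" using g' L2 gst_st[OF n1] by auto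
  have I: "linv n m bs p A ys off" using linv[OF n m v L] .
  have I2: "linv n m bs' p A2 ys2 off" using linv[OF n m v' L2] e by simp
  have "st n m (take off bs') = Lev p A2 [] off" using I2 by (simp add: linv_def)
  moreover have "st n m (take off bs) = Lev p A [] off" using I by (simp add: linv_def)
  ultimately have A2: "A2 = A" using tk by simp
  have dA: "distinct A" "length ys < length A" "length ys2 < length A" using I I2 A2 by (auto simp: linv_def)
  have "length ys2 = length ys"
    using e(1) A2 nth_eq_iff_index_eq[OF dA(1) dA(3) dA(2)] by simp
  moreover have "bs' = take off bs @ ys2" using I2 tk by (metis append_take_drop_id linv_def)
  ultimately show ?thesis using L2 e A2 v' I2 by auto
qed


lemma gmove_lmove: "gmove n m bs k = lmove n m (take k bs) (bs ! k)"
  by (cases "gst n m (take k bs)") (auto simp: gmove_def lmove_def act_def)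

lemma bs_in_iset: "n \<ge> 1 \<Longrightarrow> gvalid n m bs \<Longrightarrow> st n m bs = Lev p A ys off \<Longrightarrow>
   bs \<in> iset n m bs (A ! length ys) p off"
  by (auto simp: iset_def gst_st)

lemma iset_eq:
  assumes n: "n \<ge> 2" and m: "m \<ge> 2" and v: "gvalid n m bs" and L: "st n m bs = Lev p A ys off"
    and b': "bs' \<in> iset n m bs (A ! length ys) p off"
  shows "iset n m bs' (A ! length ys) p off = iset n m bs (A ! length ys) p off"
proof (cases "2 \<le> nstay (drop off bs)")
  case True
  then have "drop off bs' = drop off bs" "take off bs' = take off bs" using b' by (auto simp: iset_def)
  then have "bs' = bs" by (metis append_take_drop_id)
  then show ?thesis by simp
next
  case False
  then have "\<not> 2 \<le> nstay (drop off bs')" "take off bs' = take off bs" using b' by (auto simp: iset_def)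
  then show ?thesis using False unfolding iset_def by simp
qed

lemma info_props:
  assumes n: "n \<ge> 2" and m: "m \<ge> 2" and h: "h \<in> dnodes (Gstar n m) i"
  shows "h \<in> info (Gstar n m) i h \<and> info (Gstar n m) i h \<subseteq> dnodes (Gstar n m) i \<and>
     (\<forall>h' \<in> info (Gstar n m) i h. info (Gstar n m) i h' = info (Gstar n m) i h \<and>
          avail (Gstar n m) i h' = avail (Gstar n m) i h)"
proof -
  have n1: "n \<ge> 1" using n by simp
  consider "h = []" "i \<in> {1..n}" | bs p A ys off where "gvalid n m bs" "h = ghist n m bs"
     "st n m bs = Lev p A ys off" "i = A ! length ys"
    using h dnodes_iff[OF n1] by blast
  then show ?thesis
  proof cases
    case 1
    then show ?thesis using h by (simp add: Gstar_def Gstar_info_def)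
  next
    case 2
    note v = 2(1) and e = 2(2) and L = 2(3) and i = 2(4)
    have inf: "info (Gstar n m) i h = ghist n m ` iset n m bs i p off"
      using info_ghist[OF n1 v L] e by simp
    have a1: "h \<in> info (Gstar n m) i h" using inf e bs_in_iset[OF n1 v L] i by auto
    have a2: "info (Gstar n m) i h \<subseteq> dnodes (Gstar n m) i"
    proof
      fix h' assume "h' \<in> info (Gstar n m) i h"
      then obtain bs' where b': "bs' \<in> iset n m bs i p off" and e': "h' = ghist n m bs'" using inf by auto
      obtain ys' where "st n m bs' = Lev p A ys' off" "length ys' = length ys" "gvalid n m bs'"
        using iset_char[OF n m v L] b' i by blast
      then show "h' \<in> dnodes (Gstar n m) i" using dnodes_iff[OF n1] e' i by metis
    qed
    have a3: "\<forall>h' \<in> info (Gstar n m) i h. info (Gstar n m) i h' = info (Gstar n m) i h \<and>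
          avail (Gstar n m) i h' = avail (Gstar n m) i h"
    proof
      fix h' assume "h' \<in> info (Gstar n m) i h"
      then obtain bs' where b': "bs' \<in> iset n m bs i p off" and e': "h' = ghist n m bs'" using inf by auto
      obtain ys' where L': "st n m bs' = Lev p A ys' off" and l': "length ys' = length ys" and v': "gvalid n m bs'"
        using iset_char[OF n m v L] b' i by blast
      have "info (Gstar n m) i h' = ghist n m ` iset n m bs' i p off"
        using info_ghist[OF n1 v' L'] e' by simp
      also have "\<dots> = info (Gstar n m) i h" using iset_eq[OF n m v L] b' i inf by simp
      finally show "info (Gstar n m) i h' = info (Gstar n m) i h \<and> avail (Gstar n m) i h' = avail (Gstar n m) i h"
        using avail_Lev[OF n1 v' L'] avail_Lev[OF n1 v L] e e' i l' by simp
    qed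
    show ?thesis using a1 a2 a3 by blast
  qed
qed

lemma exp_eq:
  assumes n: "n \<ge> 2" and m: "m \<ge> 2" and h: "h \<in> dnodes (Gstar n m) i"
    and h': "h' \<in> info (Gstar n m) i h"
  shows "experience (Gstar n m) i h' = experience (Gstar n m) i h"
proof -
  have n1: "n \<ge> 1" using n by simp
  consider "h = []" "i \<in> {1..n}" | bs p A ys off where "gvalid n m bs" "h = ghist n m bs"
     "st n m bs = Lev p A ys off" "i = A ! length ys"
    using h dnodes_iff[OF n1] by blast
  then show ?thesis
  proof cases
    case 1
    then show ?thesis using h' by (simp add: Gstar_def Gstar_info_def)
  next
    case 2
    note v = 2(1) and e = 2(2) and L = 2(3) and i = 2(4)
    have inf: "info (Gstar n m) i h = ghist n m ` iset n m bs i p off"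
      using info_ghist[OF n1 v L] e by simp
    then obtain bs' where b': "bs' \<in> iset n m bs i p off" and e': "h' = ghist n m bs'" using h' by auto
    obtain ys' where L': "st n m bs' = Lev p A ys' off" and l': "length ys' = length ys" and v': "gvalid n m bs'"
      and bs': "bs' = take off bs @ ys'" and I': "linv n m bs' p A ys' off"
      using iset_char[OF n m v L] b' i by blast
    have I: "linv n m bs p A ys off" using linv[OF n m v L] .
    have lb: "length bs' = length bs" "off \<le> length bs" using I I' l' by (auto simp: linv_def)
    have tk: "take off bs' = take off bs" using bs' lb by simp
    have dA: "distinct A" "length ys < length A" using I by (auto simp: linv_def)
    have key: "\<forall>k < length h. (h' ! k) i = (h ! k) i \<and> ((h ! k) i \<noteq> None \<longrightarrow> take k h' = take k h)"
    proof (intro allI impI)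
      fix k assume k: "k < length h"
      show "(h' ! k) i = (h ! k) i \<and> ((h ! k) i \<noteq> None \<longrightarrow> take k h' = take k h)"
      proof (cases k)
        case 0 then show ?thesis using e e' by simp
      next
        case (Suc k')
        then have k': "k' < length bs" using k e by simp
        have hk: "h ! k = lmove n m (take k' bs) (bs ! k')" "h' ! k = lmove n m (take k' bs') (bs' ! k')"
          using e e' Suc k' lb by (auto simp: ghist_nth_Suc gmove_lmove)
        show ?thesis
        proof (cases "k' < off")
          case True
          have t1: "take k' bs' = take k' bs" using tk True by (metis min.strict_order_iff take_take)
          have t2: "bs' ! k' = bs ! k'" using tk True by (metis nth_take)
          have "take k h' = take k h" using e e' Suc ghist_take[of k' bs] ghist_take[of k' bs'] k' lb t1 by simp
          then show ?thesis using hk t1 t2 by simp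
        next
          case False
          have s1: "st n m (take k' bs) = Lev p A (take (k' - off) ys) off"
            using lev_prefix[OF I] False k' by simp
          have s2: "st n m (take k' bs') = Lev p A (take (k' - off) ys') off"
            using lev_prefix[OF I'] False k' lb by simp
          have kl: "k' - off < length ys" using I False k' by (auto simp: linv_def)
          have ne: "A ! (k' - off) \<noteq> A ! length ys"
            using nth_eq_iff_index_eq[OF dA(1)] kl dA(2) by simp
          have "(h ! k) i = None" using hk(1) lmove_Lev[OF n1 s1] i ne kl by simp
          moreover have "(h' ! k) i = None" using hk(2) lmove_Lev[OF n1 s2] i ne kl l' by simp
          ultimately show ?thesis by simp
        qed
      qed
    qed
    have lh: "length h' = length h" using e e' lb by simp
    have f: "filter (\<lambda>k. (h' ! k) i \<noteq> None) [0..<length h'] = filter (\<lambda>k. (h ! k) i \<noteq> None) [0..<length h]"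
      using lh key by (intro filter_cong) auto
    show ?thesis unfolding experience_def f
      using key by (intro map_cong) auto
  qed
qed


lemma finite_hist: assumes n: "n \<ge> 2" and m: "m \<ge> 2" shows "finite (hist (Gstar n m))"
proof -
  have "hist (Gstar n m) \<subseteq> insert [] (ghist n m ` {bs. set bs \<subseteq> UNIV \<and> length bs \<le> m * n})"
    using gvalid_len[OF n m] by (auto simp: hist_G)
  moreover have "finite {bs :: bool list. set bs \<subseteq> UNIV \<and> length bs \<le> m * n}"
    by (rule finite_lists_length_le) simp
  ultimately show ?thesis using finite_subset by blast
qed

lemma prefix_closed: "n \<ge> 1 \<Longrightarrow> h @ [a] \<in> hist (Gstar n m) \<Longrightarrow> h \<in> hist (Gstar n m)"
proof -
  assume n: "n \<ge> 1" and "h @ [a] \<in> hist (Gstar n m)"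
  then obtain bs where v: "gvalid n m bs" and e: "h @ [a] = ghist n m bs" by (auto simp: hist_G)
  show ?thesis
  proof (cases bs rule: rev_cases)
    case Nil then show ?thesis using e by (auto simp: ghist_def hist_G)
  next
    case (snoc bs0 b)
    then have "h = ghist n m bs0" "gvalid n m bs0" using e v gvalid_snoc[OF n] by (auto simp: ghist_snoc)
    then show ?thesis by (auto simp: hist_G)
  qed
qed

lemma nonterm_props:
  assumes n: "n \<ge> 2" and m: "m \<ge> 2" and h: "h \<in> hist (Gstar n m)" and nt: "\<not> terminal (Gstar n m) h"
  shows "active (Gstar n m) h \<noteq> {} \<and> active (Gstar n m) h \<subseteq> {1..n} \<and>
        (\<forall>a. h @ [a] \<in> hist (Gstar n m) \<longleftrightarrow>
              (\<forall>i. (i \<in> active (Gstar n m) h \<longrightarrow> (\<exists>x \<in> avail (Gstar n m) i h. a i = Some x)) \<and>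
                   (i \<notin> active (Gstar n m) h \<longrightarrow> a i = None)))"
proof (cases "h = []")
  case True
  have "\<And>a. [a] \<in> hist (Gstar n m) \<longleftrightarrow>
     (\<forall>i. (i \<in> {1..n} \<longrightarrow> (\<exists>x \<in> {{1..m}}. a i = Some x)) \<and> (i \<notin> {1..n} \<longrightarrow> a i = None))"
    by (auto simp: ext_Nil ginit_def)
  then show ?thesis using True active_Nil avail_Nil n by auto
next
  case False
  have n1: "n \<ge> 1" using n by simp
  obtain bs where v: "gvalid n m bs" and e: "h = ghist n m bs" using h False by (auto simp: hist_G)
  have "\<not> (\<exists>W q. st n m bs = Fin W q)" using nt terminal_iff[OF n1] v e by blast
  then obtain p A ys off where L: "st n m bs = Lev p A ys off" by (cases "st n m bs") auto
  have I: "linv n m bs p A ys off" using linv[OF n m v L] .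
  define i where "i = A ! length ys"
  have iN: "i \<in> {1..n}"
  proof -
    have "length ys < length A" "set A \<subseteq> {1..n}" using I by (auto simp: linv_def)
    then show ?thesis unfolding i_def using nth_mem by blast
  qed
  have act: "active (Gstar n m) h = {i}" using active_Lev[OF n1 v L] e i_def by simp
  have av: "avail (Gstar n m) i h = {{p<..m}, {p}}" using avail_Lev[OF n1 v L] e i_def by simp
  have "\<And>a. h @ [a] \<in> hist (Gstar n m) \<longleftrightarrow>
     (\<forall>j. (j = i \<longrightarrow> (\<exists>x \<in> {{p<..m}, {p}}. a j = Some x)) \<and> (j \<noteq> i \<longrightarrow> a j = None))"
  proof -
    fix a
    have "h @ [a] \<in> hist (Gstar n m) \<longleftrightarrow> (\<exists>b. a = lmove n m bs b)"
      using ext_ghist[OF n1 v] L e by (simp add: isLev_def)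
    also have "\<dots> \<longleftrightarrow> (\<forall>j. (j = i \<longrightarrow> (\<exists>x \<in> {{p<..m}, {p}}. a j = Some x)) \<and> (j \<noteq> i \<longrightarrow> a j = None))"
    proof
      assume "\<exists>b. a = lmove n m bs b"
      then show "\<forall>j. (j = i \<longrightarrow> (\<exists>x \<in> {{p<..m}, {p}}. a j = Some x)) \<and> (j \<noteq> i \<longrightarrow> a j = None)"
        using lmove_Lev[OF n1 L] i_def by (auto simp: act_def)
    next
      assume r: "\<forall>j. (j = i \<longrightarrow> (\<exists>x \<in> {{p<..m}, {p}}. a j = Some x)) \<and> (j \<noteq> i \<longrightarrow> a j = None)"
      then obtain x where x: "x \<in> {{p<..m}, {p}}" "a i = Some x" by auto
      then obtain b where "x = act m p b" unfolding act_def by (metis (full_types) insert_iff singleton_iff)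
      then have "a = lmove n m bs b" using r x lmove_Lev[OF n1 L] i_def by (auto simp: fun_eq_iff)
      then show "\<exists>b. a = lmove n m bs b" by blast
    qed
    finally show "h @ [a] \<in> hist (Gstar n m) \<longleftrightarrow>
     (\<forall>j. (j = i \<longrightarrow> (\<exists>x \<in> {{p<..m}, {p}}. a j = Some x)) \<and> (j \<noteq> i \<longrightarrow> a j = None))" .
  qed
  then show ?thesis using act av iN by auto
qed

lemma ef: assumes n: "n \<ge> 2" and m: "m \<ge> 2" shows "extensive_form {1..n} (Gstar n m)"
proof -
  have n1: "n \<ge> 1" using n by simp
  have nt: "\<not> terminal (Gstar n m) []" using terminal_iff[OF n1] ghist_ne by metis
  have e: "[] \<in> hist (Gstar n m)" by (simp add: hist_G)
  show ?thesis unfolding extensive_form_def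
    apply (intro conjI)
    using finite_hist[OF n m] apply blast
    using e apply blast
    using prefix_closed[OF n1] apply blast
    using nonterm_props[OF n m] apply blast
    using nt apply blast
    using active_Nil apply blast
    using info_props[OF n m] apply blast
    using exp_eq[OF n m] apply blast
    done
qed

lemma len_filter_sort: "length (filter P (sort xs)) = length (filter P xs)"
  by (simp add: filter_sort)

lemma sec_ge:
  fixes \<theta> :: "nat \<Rightarrow> nat"
  assumes a: "a \<in> {1..n}" "b \<in> {1..n}" "a \<noteq> b" "q \<le> \<theta> a" "q \<le> \<theta> b"
  shows "q \<le> rev (sort (map \<theta> [1..<Suc n])) ! 1"
proof (rule ccontr)
  define xs where "xs = map \<theta> [1..<Suc n]"
  define L where "L = sort xs"
  assume na: "\<not> q \<le> rev (sort (map \<theta> [1..<Suc n])) ! 1"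
  have n2: "n \<ge> 2" using a by auto
  have lL: "length L = n" by (simp add: L_def xs_def)
  have "rev L ! 1 = L ! (n - 2)" using lL n2 by (simp add: rev_nth numeral_2_eq_2)
  then have lt: "L ! (n - 2) < q" using na by (simp add: L_def xs_def)
  have so: "sorted L" by (simp add: L_def)
  have "{k. k < length L \<and> q \<le> L ! k} \<subseteq> {n - 1}"
  proof
    fix k assume k: "k \<in> {k. k < length L \<and> q \<le> L ! k}"
    have "\<not> k \<le> n - 2"
    proof
      assume "k \<le> n - 2"
      then have "L ! k \<le> L ! (n - 2)" using sorted_nth_mono[OF so] lL n2 by simp
      then show False using k lt by simp
    qed
    then show "k \<in> {n - 1}" using k lL by auto
  qed
  then have "card {k. k < length L \<and> q \<le> L ! k} \<le> 1" by (metis card.empty card_insert_disjoint card_mono finite.emptyI finite.insertI empty_iff One_nat_def)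
  then have c1: "length (filter (\<lambda>x. q \<le> x) xs) \<le> 1"
    using len_filter_sort[of "\<lambda>x. q \<le> x" xs] by (simp add: length_filter_conv_card L_def)
  have "{a - 1, b - 1} \<subseteq> {k. k < length xs \<and> q \<le> xs ! k}"
    using a by (auto simp: xs_def nth_map_upt simp del: upt_Suc)
  then have "card {a - 1, b - 1} \<le> card {k. k < length xs \<and> q \<le> xs ! k}" by (intro card_mono) auto
  moreover have "card {a - 1, b - 1} = 2" using a by auto
  ultimately have "length (filter (\<lambda>x. q \<le> x) xs) \<ge> 2" by (simp add: length_filter_conv_card)
  then show False using c1 by simp
qed

lemma sec_le:
  fixes \<theta> :: "nat \<Rightarrow> nat"
  assumes a: "a \<in> {1..n}" "n \<ge> 2" "\<forall>j\<in>{1..n}. j \<noteq> a \<longrightarrow> \<theta> j \<le> q"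
  shows "rev (sort (map \<theta> [1..<Suc n])) ! 1 \<le> q"
proof (rule ccontr)
  define xs where "xs = map \<theta> [1..<Suc n]"
  define L where "L = sort xs"
  assume na: "\<not> rev (sort (map \<theta> [1..<Suc n])) ! 1 \<le> q"
  have n2: "n \<ge> 2" using a by auto
  have lL: "length L = n" by (simp add: L_def xs_def)
  have "rev L ! 1 = L ! (n - 2)" using lL n2 by (simp add: rev_nth numeral_2_eq_2)
  then have lt: "q < L ! (n - 2)" using na by (simp add: L_def xs_def)
  have so: "sorted L" by (simp add: L_def)
  have "L ! (n - 2) \<le> L ! (n - 1)" using sorted_nth_mono[OF so] lL n2 by simp
  then have "{n - 2, n - 1} \<subseteq> {k. k < length L \<and> q < L ! k}" using lt lL n2 by auto
  then have "card {n - 2, n - 1} \<le> card {k. k < length L \<and> q < L ! k}" by (intro card_mono) auto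
  moreover have "card {n - 2, n - 1} = 2" using n2 by auto
  ultimately have c2: "length (filter (\<lambda>x. q < x) xs) \<ge> 2"
    using len_filter_sort[of "\<lambda>x. q < x" xs] by (simp add: length_filter_conv_card L_def)
  have "{k. k < length xs \<and> q < xs ! k} \<subseteq> {a - 1}"
  proof
    fix k assume k: "k \<in> {k. k < length xs \<and> q < xs ! k}"
    then have "k < n" "q < \<theta> (Suc k)" by (auto simp: xs_def nth_map_upt simp del: upt_Suc)
    then have "Suc k = a" using a(3) by (metis Suc_leI atLeastAtMost_iff le_add1 not_le plus_1_eq_Suc)
    then show "k \<in> {a - 1}" by auto
  qed
  then have "card {k. k < length xs \<and> q < xs ! k} \<le> 1"
    by (metis card.empty card_insert_disjoint card_mono finite.emptyI finite.insertI empty_iff One_nat_def)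
  then show False using c2 by (simp add: length_filter_conv_card)
qed

lemma sec_le_Max:
  fixes \<theta> :: "nat \<Rightarrow> nat"
  assumes "n \<ge> 2"
  shows "rev (sort (map \<theta> [1..<Suc n])) ! 1 \<le> Max (\<theta> ` {1..n})"
proof -
  have "rev (sort (map \<theta> [1..<Suc n])) ! 1 \<in> set (rev (sort (map \<theta> [1..<Suc n])))"
    using assms by (intro nth_mem) simp
  then have "rev (sort (map \<theta> [1..<Suc n])) ! 1 \<in> \<theta> ` {1..n}" by auto
  then show ?thesis by simp
qed


lemma Max_img_eq: "finite X \<Longrightarrow> w \<in> X \<Longrightarrow> \<theta> w = (c::nat) \<Longrightarrow> \<forall>j\<in>X. \<theta> j \<le> c \<Longrightarrow> Max (\<theta> ` X) = c"
  by (rule Max_eqI) auto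

lemma completion:
  assumes n: "n \<ge> 2" and m: "m \<ge> 2" and v: "gvalid n m bs0" and L: "st n m bs0 = Lev p A ys off"
    and F: "st n m (bs0 @ [b]) = Fin W q"
  defines "S \<equiv> map fst (filter snd (zip A (ys @ [b])))"
  shows "length (ys @ [b]) = length A"
    and "\<forall>k<length A. RPT n m (A ! k) (bs0 @ [b]) = act m p ((ys @ [b]) ! k)"
    and "\<forall>j\<in>{1..n}. j \<notin> set A \<longrightarrow> (\<exists>q'. 1 \<le> q' \<and> q' < p \<and> RPT n m j (bs0 @ [b]) = {q'})"
    and "(W, q) = (if length S = 1 then (return_pmf (hd S), p) else if S = [] then (pmf_of_set (set A), p)
                   else (pmf_of_set (set S), m))"
    and "2 \<le> length S \<Longrightarrow> \<not> Suc p < m"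
    and "set S = {A ! k | k. k < length A \<and> (ys @ [b]) ! k}"
    and "linv n m bs0 p A ys off"
proof -
  have n1: "n \<ge> 1" using n by simp
  have I: "linv n m bs0 p A ys off" using linv[OF n m v L] .
  then show "linv n m bs0 p A ys off" .
  have S2: "stp m (Lev p A ys off) b = Fin W q" using F L by (simp add: st_snoc)
  have ly: "length ys < length A" using I unfolding linv_def by blast
  show len: "length (ys @ [b]) = length A"
  proof (rule ccontr)
    assume "length (ys @ [b]) \<noteq> length A"
    then have "length (ys @ [b]) < length A" using ly by simp
    then show False using S2 by (simp add: Let_def)
  qed
  note RA = RPT_after[OF n1 L I, of b]
  show "\<forall>k<length A. RPT n m (A ! k) (bs0 @ [b]) = act m p ((ys @ [b]) ! k)"
    using RA(1) len by auto
  show "\<forall>j\<in>{1..n}. j \<notin> set A \<longrightarrow> (\<exists>q'. 1 \<le> q' \<and> q' < p \<and> RPT n m j (bs0 @ [b]) = {q'})"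
    using RA(2) I by (auto simp: linv_def)
  show "(W, q) = (if length S = 1 then (return_pmf (hd S), p) else if S = [] then (pmf_of_set (set A), p)
                   else (pmf_of_set (set S), m))"
    using S2 len unfolding S_def by (auto simp: Let_def split: if_splits)
  show "2 \<le> length S \<Longrightarrow> \<not> Suc p < m"
    using S2 len unfolding S_def by (auto simp: Let_def split: if_splits)
  show "set S = {A ! k | k. k < length A \<and> (ys @ [b]) ! k}"
    unfolding S_def set_stayers using len by auto
qed

lemma impl:
  assumes n: "n \<ge> 2" and m: "m \<ge> 2" and v: "gvalid n m bs" and F: "st n m bs = Fin W q"
    and th: "\<forall>j\<in>{1..n}. \<theta> j \<in> RPT n m j bs"
  shows "(W, q) = second_price n \<theta>"
proof -
  have n1: "n \<ge> 1" using n by simp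
  have "bs \<noteq> []" using F by (metis foldl_Nil st_def lstate.distinct(1))
  then obtain bs0 b where bs: "bs = bs0 @ [b]" by (cases bs rule: rev_cases) auto
  have v0: "gvalid n m bs0" "isLev (st n m bs0)" using v bs gvalid_snoc[OF n1] by auto
  then obtain p A ys off where L: "st n m bs0 = Lev p A ys off" by (cases "st n m bs0") (auto simp: isLev_def)
  define ys' where "ys' = ys @ [b]"
  define S where "S = map fst (filter snd (zip A ys'))"
  note C = completion[OF n m v0(1) L, of b W q, folded ys'_def S_def bs, OF F]
  have I: "1 \<le> p" "p < m" "distinct A" "set A \<subseteq> {1..n}" "2 \<le> length A" using C(7) by (auto simp: linv_def)
  have C4: "(W, q) = (if length S = 1 then (return_pmf (hd S), p) else if S = [] then (pmf_of_set (set A), p)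
                   else (pmf_of_set (set S), m))" unfolding S_def by (rule C(4))
  have C5: "2 \<le> length S \<Longrightarrow> \<not> Suc p < m" unfolding S_def by (rule C(5))
  have dS: "distinct S" unfolding S_def using distinct_stayers I by blast
  have SA: "set S \<subseteq> set A" unfolding S_def by (auto dest: set_zip_leftD)
  have setS: "set S = {A ! k | k. k < length A \<and> ys' ! k}"
    unfolding S_def set_stayers using C(1) by (auto simp: ys'_def)
  have thS: "\<forall>j\<in>set S. p < \<theta> j \<and> \<theta> j \<le> m"
  proof
    fix j assume "j \<in> set S"
    then obtain k where k: "k < length A" "j = A ! k" "ys' ! k" unfolding setS by blast
    then have "RPT n m j bs = {p<..m}" using C(2) by (auto simp: act_def)
    moreover have "j \<in> {1..n}" using k I(4) nth_mem by blast
    ultimately show "p < \<theta> j \<and> \<theta> j \<le> m" using th by auto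
  qed
  have thA: "\<forall>j\<in>set A. j \<notin> set S \<longrightarrow> \<theta> j = p"
  proof (intro ballI impI)
    fix j assume j: "j \<in> set A" "j \<notin> set S"
    then obtain k where k: "k < length A" "j = A ! k" by (auto simp: in_set_conv_nth)
    then have "\<not> ys' ! k" using j setS by auto
    then have "RPT n m j bs = {p}" using C(2) k by (auto simp: act_def)
    moreover have "j \<in> {1..n}" using j I by auto
    ultimately show "\<theta> j = p" using th by auto
  qed
  have thO: "\<forall>j\<in>{1..n}. j \<notin> set A \<longrightarrow> \<theta> j < p"
    using C(3) th by fastforce
  have sp: "second_price n \<theta> = (pmf_of_set {j \<in> {1..n}. \<theta> j = Max (\<theta> ` {1..n})}, rev (sort (map \<theta> [1..<Suc n])) ! 1)"
    by (simp add: second_price_def)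
  have lA: "0 < length A" "1 < length A" using I(5) by auto
  have A01: "A ! 0 \<in> set A" "A ! 1 \<in> set A" "A ! 0 \<noteq> A ! 1"
    using nth_mem[OF lA(1)] nth_mem[OF lA(2)] nth_eq_iff_index_eq[OF I(3) lA] by auto
  show ?thesis
  proof (cases "length S = 1")
    case True
    then obtain w where Sw: "S = [w]" by (cases S) auto
    have Wq: "W = return_pmf w" "q = p" using C4 True Sw by auto
    have wN: "w \<in> {1..n}" using Sw SA I by auto
    have tw: "p < \<theta> w" using thS Sw by auto
    have le: "\<forall>j\<in>{1..n}. j \<noteq> w \<longrightarrow> \<theta> j \<le> p" using thA thO Sw by fastforce
    have M: "Max (\<theta> ` {1..n}) = \<theta> w" using Max_img_eq[of "{1..n}" w \<theta> "\<theta> w"] wN le tw by fastforce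
    have am: "{j \<in> {1..n}. \<theta> j = Max (\<theta> ` {1..n})} = {w}" using M wN le tw by fastforce
    obtain j0 where j0: "j0 \<in> set A" "j0 \<noteq> w" using A01 by metis
    have tj0: "\<theta> j0 = p" using thA j0 Sw by auto
    have pr: "rev (sort (map \<theta> [1..<Suc n])) ! 1 = p"
      using sec_ge[of w n j0 p \<theta>] sec_le[of w n \<theta> p] wN j0 I tw tj0 le n by fastforce
    show ?thesis using sp am pr Wq by (simp add: pmf_of_set_singleton)
  next
    case F1: False
    show ?thesis
    proof (cases "S = []")
      case True
      have Wq: "W = pmf_of_set (set A)" "q = p" using C4 True by auto
      have le: "\<forall>j\<in>{1..n}. \<theta> j \<le> p" using thA thO True by fastforce
      have a0: "A ! 0 \<in> {1..n}" "\<theta> (A ! 0) = p" using A01 I thA True by auto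
      have M: "Max (\<theta> ` {1..n}) = p" using Max_img_eq[of "{1..n}" "A ! 0" \<theta> p] a0 le by fastforce
      have am: "{j \<in> {1..n}. \<theta> j = Max (\<theta> ` {1..n})} = set A" using M I thA thO True by fastforce
      have pr: "rev (sort (map \<theta> [1..<Suc n])) ! 1 = p"
        using sec_ge[of "A ! 0" n "A ! 1" p \<theta>] sec_le[of "A ! 0" n \<theta> p] A01 I thA True le n by fastforce
      show ?thesis using sp am pr Wq by simp
    next
      case False
      have l2: "2 \<le> length S" using F1 False by (cases S) (auto simp: Suc_le_eq)
      have Wq: "W = pmf_of_set (set S)" "q = m" using C4 F1 False by auto
      have pm: "p = m - 1" using C5[OF l2] I by simp
      have thS': "\<forall>j\<in>set S. \<theta> j = m" using thS pm by fastforce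
      have le: "\<forall>j\<in>{1..n}. \<theta> j \<le> m" using thS thA thO I by fastforce
      have lS: "0 < length S" "1 < length S" using l2 by auto
      have S01: "S ! 0 \<in> set S" "S ! 1 \<in> set S" "S ! 0 \<noteq> S ! 1"
        using nth_mem[OF lS(1)] nth_mem[OF lS(2)] nth_eq_iff_index_eq[OF dS lS] by auto
      have a0: "S ! 0 \<in> {1..n}" "S ! 1 \<in> {1..n}" using S01 SA I by auto
      have M: "Max (\<theta> ` {1..n}) = m" using Max_img_eq[of "{1..n}" "S ! 0" \<theta> m] a0 le thS' S01 by fastforce
      have am: "{j \<in> {1..n}. \<theta> j = Max (\<theta> ` {1..n})} = set S"
        using M thS' thA thO SA I pm by fastforce
      have pr: "rev (sort (map \<theta> [1..<Suc n])) ! 1 = m"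
        using sec_ge[of "S ! 0" n "S ! 1" m \<theta>] sec_le[of "S ! 0" n \<theta> m] S01 a0 thS' le n by fastforce
      show ?thesis using sp am pr Wq by simp
    qed
  qed
qed

lemma outc_ghist: "n \<ge> 1 \<Longrightarrow> gvalid n m bs \<Longrightarrow> st n m bs = Fin W q \<Longrightarrow> outc (Gstar n m) (ghist n m bs) = (W, q)"
  by (simp add: Gstar_def Gstar_outc_def gdec_ghist gst_st)

lemma implements_G: assumes n: "n \<ge> 2" and m: "m \<ge> 2"
  shows "implements (\<lambda>_. {1..m}) {1..n} (second_price n) (Gstar n m)"
  unfolding implements_def
proof (intro allI impI)
  fix z \<theta> assume t: "terminal (Gstar n m) z" and th: "\<forall>i\<in>{1..n}. \<theta> i \<in> report (\<lambda>_. {1..m}) i z"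
  have n1: "n \<ge> 1" using n by simp
  obtain bs W q where "gvalid n m bs" "z = ghist n m bs" "st n m bs = Fin W q" using t terminal_iff[OF n1] by blast
  then show "outc (Gstar n m) z = second_price n \<theta>"
    using impl[OF n m, of bs W q \<theta>] th outc_ghist[OF n1] by simp
qed

lemma report_Nil: "report \<Theta> i [] = \<Theta> i"
  by (simp add: report_def)

lemma gradual_G: assumes n: "n \<ge> 2" and m: "m \<ge> 2"
  shows "gradual (\<lambda>_. {1..m}) {1..n} (Gstar n m)"
  unfolding gradual_def
proof (intro ballI)
  fix i h assume i: "i \<in> {1..n}" and h: "h \<in> dnodes (Gstar n m) i"
  have n1: "n \<ge> 1" using n by simp
  consider "h = []" | bs p A ys off where "gvalid n m bs" "h = ghist n m bs"
     "st n m bs = Lev p A ys off" "i = A ! length ys"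
    using h dnodes_iff[OF n1] by blast
  then show "(\<forall>x\<in>avail (Gstar n m) i h. x \<noteq> {} \<and> x \<subseteq> {1..m}) \<and>
         (\<forall>x\<in>avail (Gstar n m) i h. \<forall>y\<in>avail (Gstar n m) i h. x \<noteq> y \<longrightarrow> x \<inter> y = {}) \<and>
         \<Union> (avail (Gstar n m) i h) = report (\<lambda>_. {1..m}) i h"
  proof cases
    case 1
    then show ?thesis using avail_Nil[OF i] m by (simp add: report_Nil)
  next
    case 2
    have I: "linv n m bs p A ys off" using linv[OF n m 2(1,3)] .
    then have r: "RPT n m i bs = {p..m}" using 2(4) by (auto simp: linv_def)
    have pm: "1 \<le> p" "p < m" using I by (auto simp: linv_def)
    have av: "avail (Gstar n m) i h = {{p<..m}, {p}}" using avail_Lev[OF n1 2(1,3)] 2 by simp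
    show ?thesis using av r pm 2(2) by auto
  qed
qed

definition dec :: "nat \<Rightarrow> nat \<Rightarrow> (nat \<Rightarrow> (nat, nat) history \<Rightarrow> nat set) \<Rightarrow> bool list \<Rightarrow> bool" where
  "dec n m s bs = (case st n m bs of Lev p A ys off \<Rightarrow> s (A ! length ys) (ghist n m bs) = {p<..m}
                    | Fin _ _ \<Rightarrow> False)"

definition cons_bs :: "nat \<Rightarrow> nat \<Rightarrow> (nat \<Rightarrow> (nat, nat) history \<Rightarrow> nat set) \<Rightarrow> bool list \<Rightarrow> bool" where
  "cons_bs n m s bs \<longleftrightarrow> gvalid n m bs \<and> (\<forall>k<length bs. bs ! k = dec n m s (take k bs))"

definition strats :: "nat \<Rightarrow> nat \<Rightarrow> (nat \<Rightarrow> (nat, nat) history \<Rightarrow> nat set) \<Rightarrow> bool" where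
  "strats n m s \<longleftrightarrow> (\<forall>j\<in>{1..n}. strategy (Gstar n m) j (s j))"

lemma strat_Nil: "n \<ge> 1 \<Longrightarrow> strategy (Gstar n m) j sj \<Longrightarrow> j \<in> {1..n} \<Longrightarrow> sj [] = {1..m}"
proof -
  assume a: "n \<ge> 1" "strategy (Gstar n m) j sj" "j \<in> {1..n}"
  have "[] \<in> dnodes (Gstar n m) j" unfolding dnodes_iff[OF a(1)] using a(3) by blast
  then have "sj [] \<in> avail (Gstar n m) j []" using a(2) unfolding strategy_def by blast
  then show ?thesis using avail_Nil[OF a(3)] by simp
qed

lemma strat_Lev: "n \<ge> 1 \<Longrightarrow> strategy (Gstar n m) (A ! length ys) sj \<Longrightarrow> gvalid n m bs \<Longrightarrow>
    st n m bs = Lev p A ys off \<Longrightarrow> sj (ghist n m bs) \<in> {{p<..m}, {p}}"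
proof -
  assume a: "n \<ge> 1" "strategy (Gstar n m) (A ! length ys) sj" "gvalid n m bs" "st n m bs = Lev p A ys off"
  have "ghist n m bs \<in> dnodes (Gstar n m) (A ! length ys)" unfolding dnodes_iff[OF a(1)] using a(3,4) by blast
  then have "sj (ghist n m bs) \<in> avail (Gstar n m) (A ! length ys) (ghist n m bs)" using a(2) unfolding strategy_def by blast
  then show ?thesis using avail_Lev[OF a(1,3,4)] by simp
qed

lemma act_eq_iff: "p < m \<Longrightarrow> x \<in> {{p<..m}, {p}} \<Longrightarrow> (act m p b = x) \<longleftrightarrow> (b \<longleftrightarrow> x = {p<..m})"
proof -
  assume "p < m" "x \<in> {{p<..m}, {p}}"
  moreover have "{p<..m} \<noteq> {p}" by auto
  ultimately show ?thesis by (auto simp: act_def)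
qed

lemma mover_in: "n \<ge> 2 \<Longrightarrow> m \<ge> 2 \<Longrightarrow> gvalid n m bs \<Longrightarrow> st n m bs = Lev p A ys off \<Longrightarrow>
   A ! length ys \<in> {1..n} \<and> p < m"
proof -
  assume a: "n \<ge> 2" "m \<ge> 2" "gvalid n m bs" "st n m bs = Lev p A ys off"
  have I: "linv n m bs p A ys off" using linv[OF a] .
  then have "length ys < length A" "set A \<subseteq> {1..n}" "p < m" by (auto simp: linv_def)
  then show ?thesis using nth_mem by blast
qed

lemma consistent_iff:
  assumes n: "n \<ge> 2" and m: "m \<ge> 2" and s: "strats n m s" and v: "gvalid n m bs"
  shows "consistent (Gstar n m) s (ghist n m bs) \<longleftrightarrow> cons_bs n m s bs"
proof -
  have n1: "n \<ge> 1" using n by simp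
  have k0: "ghist n m bs ! 0 = (\<lambda>i. if i \<in> active (Gstar n m) (take 0 (ghist n m bs)) then Some (s i (take 0 (ghist n m bs))) else None)"
  proof -
    have sN: "\<forall>j\<in>{1..n}. s j [] = {1..m}" using strat_Nil[OF n1, of m] s unfolding strats_def by blast
    show ?thesis using sN by (auto simp: active_Nil ginit_def fun_eq_iff)
  qed
  have kS: "ghist n m bs ! Suc k = (\<lambda>i. if i \<in> active (Gstar n m) (take (Suc k) (ghist n m bs)) then Some (s i (take (Suc k) (ghist n m bs))) else None)
      \<longleftrightarrow> bs ! k = dec n m s (take k bs)" if k: "k < length bs" for k
  proof -
    have vk: "gvalid n m (take k bs)" using gvalid_take[OF v] .
    obtain p A ys off where L: "st n m (take k bs) = Lev p A ys off"
      using Lev_inj[OF n1 v k] by (cases "st n m (take k bs)") (auto simp: isLev_def)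
    define i where "i = A ! length ys"
    have iN: "i \<in> {1..n}" and pm: "p < m" using mover_in[OF n m vk L] i_def by auto
    have th: "take (Suc k) (ghist n m bs) = ghist n m (take k bs)" using ghist_take k by simp
    have gk: "ghist n m bs ! Suc k = (\<lambda>j. if j = i then Some (act m p (bs ! k)) else None)"
      using k by (simp add: ghist_nth_Suc gmove_lmove lmove_Lev[OF n1 L] i_def)
    have ac: "active (Gstar n m) (ghist n m (take k bs)) = {i}" using active_Lev[OF n1 vk L] i_def by simp
    have sx: "s i (ghist n m (take k bs)) \<in> {{p<..m}, {p}}"
      using strat_Lev[OF n1 _ vk L] s iN i_def by (auto simp: strats_def)
    have "ghist n m bs ! Suc k = (\<lambda>j. if j \<in> active (Gstar n m) (take (Suc k) (ghist n m bs)) then Some (s j (take (Suc k) (ghist n m bs))) else None)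
       \<longleftrightarrow> act m p (bs ! k) = s i (ghist n m (take k bs))"
      unfolding gk th ac by (auto simp: fun_eq_iff)
    also have "\<dots> \<longleftrightarrow> (bs ! k \<longleftrightarrow> s i (ghist n m (take k bs)) = {p<..m})"
      using act_eq_iff[OF pm sx] .
    also have "\<dots> \<longleftrightarrow> bs ! k = dec n m s (take k bs)"
      by (simp add: dec_def L i_def)
    finally show ?thesis .
  qed
  show ?thesis
  proof
    assume c: "consistent (Gstar n m) s (ghist n m bs)"
    have "\<forall>k<length bs. bs ! k = dec n m s (take k bs)"
    proof (intro allI impI)
      fix k assume k: "k < length bs"
      then have "Suc k < length (ghist n m bs)" by simp
      then show "bs ! k = dec n m s (take k bs)" using c kS[OF k] unfolding consistent_def by blast
    qed
    then show "cons_bs n m s bs" using v by (simp add: cons_bs_def)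
  next
    assume c: "cons_bs n m s bs"
    show "consistent (Gstar n m) s (ghist n m bs)" unfolding consistent_def
    proof (intro allI impI)
      fix k assume k: "k < length (ghist n m bs)"
      show "ghist n m bs ! k = (\<lambda>i. if i \<in> active (Gstar n m) (take k (ghist n m bs)) then Some (s i (take k (ghist n m bs))) else None)"
      proof (cases k)
        case 0 then show ?thesis using k0 by (simp only: 0)
      next
        case (Suc k')
        then have k': "k' < length bs" using k by simp
        then have "ghist n m bs ! Suc k' = (\<lambda>i. if i \<in> active (Gstar n m) (take (Suc k') (ghist n m bs)) then Some (s i (take (Suc k') (ghist n m bs))) else None)"
          using kS[OF k'] c by (simp add: cons_bs_def)
        then show ?thesis by (simp only: Suc)
      qed
    qed
  qed
qed

lemma cons_prefix:
  assumes c1: "cons_bs n m s bs1" and c2: "cons_bs n m s bs2" and l: "length bs1 \<le> length bs2"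
  shows "bs1 = take (length bs1) bs2"
proof -
  have "\<forall>k\<le>length bs1. take k bs1 = take k bs2"
  proof (intro allI impI)
    fix k show "k \<le> length bs1 \<Longrightarrow> take k bs1 = take k bs2"
    proof (induction k)
      case 0 then show ?case by simp
    next
      case (Suc k)
      then have k1: "k < length bs1" and k2: "k < length bs2" using l by auto
      have "bs1 ! k = bs2 ! k" using c1 c2 Suc k1 k2 by (simp add: cons_bs_def)
      then show ?case using Suc k1 k2 by (simp add: take_Suc_conv_app_nth)
    qed
  qed
  then show ?thesis by (metis order_refl take_all)
qed

definition isFin :: "lstate \<Rightarrow> bool" where "isFin s \<longleftrightarrow> \<not> isLev s"

lemma cons_unique:
  assumes n: "n \<ge> 1" and c1: "cons_bs n m s bs1" and c2: "cons_bs n m s bs2"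
    and f1: "\<not> isLev (st n m bs1)" and f2: "\<not> isLev (st n m bs2)"
  shows "bs1 = bs2"
proof -
  have v1: "gvalid n m bs1" and v2: "gvalid n m bs2" using c1 c2 by (auto simp: cons_bs_def)
  show ?thesis
  proof (cases "length bs1 \<le> length bs2")
    case True
    then have e: "bs1 = take (length bs1) bs2" using cons_prefix[OF c1 c2] by simp
    show ?thesis
    proof (cases "length bs1 < length bs2")
      case True
      then have "isLev (st n m (take (length bs1) bs2))" using Lev_inj[OF n v2] by blast
      then show ?thesis using e f1 by simp
    next
      case False then show ?thesis using e True by simp
    qed
  next
    case False
    then have e: "bs2 = take (length bs2) bs1" using cons_prefix[OF c2 c1] by simp
    have "isLev (st n m (take (length bs2) bs1))" using Lev_inj[OF n v1] False by simp
    then show ?thesis using e f2 by simp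
  qed
qed

lemma cons_exists:
  assumes n: "n \<ge> 2" and m: "m \<ge> 2"
  shows "\<exists>bs. cons_bs n m s bs \<and> \<not> isLev (st n m bs)"
proof -
  have n1: "n \<ge> 1" using n by simp
  have "\<exists>bs. cons_bs n m s bs \<and> (\<not> isLev (st n m bs) \<or> length bs = N)" for N
  proof (induction N)
    case 0
    have "cons_bs n m s []" by (simp add: cons_bs_def)
    then show ?case by blast
  next
    case (Suc N)
    then obtain bs where c: "cons_bs n m s bs" and o: "\<not> isLev (st n m bs) \<or> length bs = N" by blast
    show ?case
    proof (cases "isLev (st n m bs)")
      case False then show ?thesis using c by blast
    next
      case True
      define bs' where "bs' = bs @ [dec n m s bs]"
      have "gvalid n m bs'" using c True gvalid_snoc[OF n1] by (simp add: bs'_def cons_bs_def)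
      moreover have "\<forall>k<length bs'. bs' ! k = dec n m s (take k bs')"
        using c by (auto simp: bs'_def cons_bs_def nth_append less_Suc_eq)
      ultimately have "cons_bs n m s bs'" by (simp add: cons_bs_def)
      then show ?thesis using o True by (auto simp: bs'_def)
    qed
  qed
  from this[of "Suc (m * n)"] obtain bs where c: "cons_bs n m s bs"
    and o: "\<not> isLev (st n m bs) \<or> length bs = Suc (m * n)" by blast
  have "length bs \<le> m * n" using gvalid_len[OF n m] c by (simp add: cons_bs_def)
  then show ?thesis using c o by auto
qed

lemma play_eq:
  assumes n: "n \<ge> 2" and m: "m \<ge> 2" and s: "strats n m s" and c: "cons_bs n m s bs"
    and F: "st n m bs = Fin W q"
  shows "play (Gstar n m) s = (W, q)"
proof -
  have n1: "n \<ge> 1" using n by simp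
  have v: "gvalid n m bs" using c by (simp add: cons_bs_def)
  have "(THE z. terminal (Gstar n m) z \<and> consistent (Gstar n m) s z) = ghist n m bs"
  proof (rule the_equality)
    show "terminal (Gstar n m) (ghist n m bs) \<and> consistent (Gstar n m) s (ghist n m bs)"
      using terminal_iff[OF n1] v F consistent_iff[OF n m s v] c by blast
  next
    fix z assume z: "terminal (Gstar n m) z \<and> consistent (Gstar n m) s z"
    then obtain bs' W' q' where v': "gvalid n m bs'" and e: "z = ghist n m bs'" and F': "st n m bs' = Fin W' q'"
      using terminal_iff[OF n1] by blast
    have "cons_bs n m s bs'" using z e consistent_iff[OF n m s v'] by simp
    then have "bs' = bs" using cons_unique[OF n1 _ c] F F' by (simp add: isLev_def)
    then show "z = ghist n m bs" using e by simp
  qed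
  then show ?thesis unfolding play_def using outc_ghist[OF n1 v F] by simp
qed

lemma cons_act:
  assumes n: "n \<ge> 2" and m: "m \<ge> 2" and s: "strats n m s" and c: "cons_bs n m s bs"
    and k: "k < length bs" and L: "st n m (take k bs) = Lev p A ys off"
  shows "act m p (bs ! k) = s (A ! length ys) (ghist n m (take k bs))"
proof -
  have n1: "n \<ge> 1" using n by simp
  have v: "gvalid n m (take k bs)" using c gvalid_take by (auto simp: cons_bs_def)
  have iN: "A ! length ys \<in> {1..n}" and pm: "p < m" using mover_in[OF n m v L] by auto
  have sx: "s (A ! length ys) (ghist n m (take k bs)) \<in> {{p<..m}, {p}}"
    using strat_Lev[OF n1 _ v L] s iN by (auto simp: strats_def)
  have "bs ! k = dec n m s (take k bs)" using c k by (simp add: cons_bs_def)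
  then have "bs ! k \<longleftrightarrow> s (A ! length ys) (ghist n m (take k bs)) = {p<..m}" by (simp add: dec_def L)
  then show ?thesis using act_eq_iff[OF pm sx] by simp
qed

lemma RPT_snoc_take:
  assumes n: "n \<ge> 1" and k: "k < length bs" and L: "st n m (take k bs) = Lev p A ys off"
  shows "RPT n m j (take (Suc k) bs) = (if j = A ! length ys then act m p (bs ! k) else RPT n m j (take k bs))"
  using RPT_snoc_Lev[OF n L, of j "bs ! k"] k by (simp add: take_Suc_conv_app_nth)

lemma RPT_Lev_sub:
  assumes n: "n \<ge> 2" and m: "m \<ge> 2" and v: "gvalid n m bs" and L: "st n m bs = Lev p A ys off"
    and j: "j \<in> set A"
  shows "RPT n m j bs \<subseteq> {p..m}"
proof -
  have I: "linv n m bs p A ys off" using linv[OF n m v L] .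
  obtain k where k: "k < length A" "j = A ! k" using j by (auto simp: in_set_conv_nth)
  show ?thesis using I k by (auto simp: linv_def act_def)
qed

lemma RPT_mono:
  assumes n: "n \<ge> 2" and m: "m \<ge> 2" and v: "gvalid n m bs" and kk: "k \<le> k'" and k': "k' \<le> length bs"
  shows "RPT n m j (take k' bs) \<subseteq> RPT n m j (take k bs)"
  using kk k'
proof (induction k' rule: dec_induct)
  case base then show ?case by simp
next
  case (step x)
  have n1: "n \<ge> 1" using n by simp
  have x: "x < length bs" using step by simp
  obtain p A ys off where L: "st n m (take x bs) = Lev p A ys off"
    using Lev_inj[OF n1 v x] by (cases "st n m (take x bs)") (auto simp: isLev_def)
  have vx: "gvalid n m (take x bs)" using gvalid_take[OF v] .
  have "RPT n m j (take (Suc x) bs) \<subseteq> RPT n m j (take x bs)"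
  proof (cases "j = A ! length ys")
    case True
    have I: "linv n m (take x bs) p A ys off" using linv[OF n m vx L] .
    have l: "length ys < length A" "p < m" using I unfolding linv_def by blast+
    have "\<forall>k<length A. RPT n m (A ! k) (take x bs) = (if k < length ys then act m p (ys ! k) else {p..m})"
      using I unfolding linv_def by blast
    then have e0: "RPT n m j (take x bs) = {p..m}"
      using l True by auto
    have e1: "RPT n m j (take (Suc x) bs) = act m p (bs ! x)" using RPT_snoc_take[OF n1 x L] True by simp
    have e2: "act m p (bs ! x) \<subseteq> {p..m}" using l(2) by (auto simp: act_def)
    show ?thesis unfolding e0 e1 by (rule e2)
  next
    case False
    then show ?thesis using RPT_snoc_take[OF n1 x L] by simp
  qed
  then show ?case using step by auto
qed

lemma RPT_ne:
  assumes n: "n \<ge> 2" and m: "m \<ge> 2"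
  shows "gvalid n m bs \<Longrightarrow> RPT n m j bs \<noteq> {}"
proof (induction bs rule: rev_induct)
  case Nil then show ?case using m by (simp only: report_ghist_Nil) simp
next
  case (snoc b bs)
  have n1: "n \<ge> 1" using n by simp
  have v: "gvalid n m bs" "isLev (st n m bs)" using snoc.prems gvalid_snoc[OF n1] by auto
  then obtain p A ys off where L: "st n m bs = Lev p A ys off" by (cases "st n m bs") (auto simp: isLev_def)
  have "p < m" using linv[OF n m v(1) L] by (simp add: linv_def)
  then show ?case using RPT_snoc_Lev[OF n1 L, of j b] snoc.IH[OF v(1)] by (auto simp: act_def)
qed

lemma level_through:
  assumes n: "n \<ge> 2" and m: "m \<ge> 2" and v: "gvalid n m bs" and k: "k \<le> length bs"
    and L: "st n m (take k bs) = Lev p A ys off" and F: "\<not> isLev (st n m bs)"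
  shows "off + length A \<le> length bs"
    and "\<And>k'. off \<le> k' \<Longrightarrow> k' < off + length A \<Longrightarrow> st n m (take k' bs) = Lev p A (take (k' - off) (drop off bs)) off"
    and "off \<le> k" and "st n m (take off bs) = Lev p A [] off"
proof -
  have vk: "gvalid n m (take k bs)" using gvalid_take[OF v] .
  have I: "linv n m (take k bs) p A ys off" using linv[OF n m vk L] .
  have ok: "off \<le> k" using I k by (auto simp: linv_def)
  then show "off \<le> k" .
  have t0: "st n m (take off bs) = Lev p A [] off" using I ok by (auto simp: linv_def min_def)
  then show "st n m (take off bs) = Lev p A [] off" .
  have gen: "st n m (take k' bs) = Lev p A (take (k' - off) (drop off bs)) off"
    if "off \<le> k'" "k' < off + length A" "k' \<le> length bs" for k'
  proof -
    have "take k' bs = take off bs @ take (k' - off) (drop off bs)" using that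
      by (metis le_add_diff_inverse take_add)
    then have "st n m (take k' bs) = foldl (stp m) (Lev p A [] off) (take (k' - off) (drop off bs))"
      using t0 by (simp add: st_append)
    also have "\<dots> = Lev p A (take (k' - off) (drop off bs)) off" using that by (subst foldl_lev) auto
    finally show ?thesis .
  qed
  show le: "off + length A \<le> length bs"
  proof (rule ccontr)
    assume "\<not> off + length A \<le> length bs"
    then have "st n m (take (length bs) bs) = Lev p A (take (length bs - off) (drop off bs)) off"
      using gen[of "length bs"] ok k by simp
    then show False using F by (simp add: isLev_def)
  qed
  show "\<And>k'. off \<le> k' \<Longrightarrow> k' < off + length A \<Longrightarrow> st n m (take k' bs) = Lev p A (take (k' - off) (drop off bs)) off"
    using gen le by simp
qed

lemma stayers_none: "\<forall>k<length Y. \<not> Y ! k \<Longrightarrow> filter snd (zip A Y) = []"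
  by (auto simp: filter_empty_conv set_zip)

lemma stayers_single:
  "length Y = length A \<Longrightarrow> r < length A \<Longrightarrow> (\<forall>k<length Y. Y ! k \<longleftrightarrow> k = r) \<Longrightarrow>
     map fst (filter snd (zip A Y)) = [A ! r]"
proof (induction A arbitrary: Y r)
  case Nil then show ?case by simp
next
  case (Cons a A)
  then obtain y Y' where Y: "Y = y # Y'" by (cases Y) auto
  show ?case
  proof (cases r)
    case 0
    have P: "\<forall>k<length Y. Y ! k \<longleftrightarrow> k = r" using Cons.prems by blast
    have y: "y" using P Y 0 by auto
    have "\<forall>k<length Y'. \<not> Y' ! k"
    proof (intro allI impI)
      fix k assume "k < length Y'"
      then have "Suc k < length Y" using Y by simp
      then show "\<not> Y' ! k" using P Y 0 by fastforce
    qed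
    then have "filter snd (zip A Y') = []" by (rule stayers_none)
    then show ?thesis using Y 0 y by simp
  next
    case (Suc r')
    have P: "\<forall>k<length Y. Y ! k \<longleftrightarrow> k = r" using Cons.prems by blast
    have y: "\<not> y" using P Y Suc by auto
    have Q: "\<forall>k<length Y'. Y' ! k \<longleftrightarrow> k = r'"
    proof (intro allI impI)
      fix k assume "k < length Y'"
      then have "Suc k < length Y" using Y by simp
      then show "Y' ! k \<longleftrightarrow> k = r'" using P Y Suc by fastforce
    qed
    have "map fst (filter snd (zip A Y')) = [A ! r']" using Cons.IH[of Y' r'] Q Cons.prems Y Suc by simp
    then show ?thesis using Y Suc y by simp
  qed
qed

lemma sp_win:
  fixes \<theta> :: "nat \<Rightarrow> nat"
  assumes n: "n \<ge> 2" and p: "pmf (fst (second_price n \<theta>)) i \<noteq> 0"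
  shows "\<theta> i = Max (\<theta> ` {1..n}) \<and> i \<in> {1..n}"
proof -
  define M where "M = {j \<in> {1..n}. \<theta> j = Max (\<theta> ` {1..n})}"
  have "Max (\<theta> ` {1..n}) \<in> \<theta> ` {1..n}" using n by (intro Max_in) auto
  then have ne: "M \<noteq> {}" by (auto simp: M_def)
  have fin: "finite M" by (simp add: M_def)
  have "pmf (pmf_of_set M) i \<noteq> 0" using p by (simp add: second_price_def M_def)
  then have "i \<in> M" using pmf_of_set[OF ne fin] by (auto simp: indicator_def)
  then show ?thesis by (simp add: M_def)
qed

lemma payoff_nonneg:
  fixes \<theta> :: "nat \<Rightarrow> nat"
  assumes n: "n \<ge> 2"
  shows "0 \<le> pmf (fst (second_price n \<theta>)) i * (real (\<theta> i) - real (snd (second_price n \<theta>)))"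
proof (cases "pmf (fst (second_price n \<theta>)) i = 0")
  case True then show ?thesis by simp
next
  case False
  then have "\<theta> i = Max (\<theta> ` {1..n})" using sp_win[OF n] by blast
  moreover have "snd (second_price n \<theta>) \<le> Max (\<theta> ` {1..n})"
    using sec_le_Max[OF n] by (simp add: second_price_def)
  ultimately show ?thesis by simp
qed

lemma outcome_reports:
  assumes n: "n \<ge> 2" and m: "m \<ge> 2" and v: "gvalid n m bs" and F: "st n m bs = Fin W q"
    and x: "x \<in> RPT n m i bs"
  shows "\<exists>\<theta>. \<theta> i = x \<and> (\<forall>j\<in>{1..n}. \<theta> j \<in> RPT n m j bs) \<and> (W, q) = second_price n \<theta>"
proof -
  define \<theta> where "\<theta> = (\<lambda>j. if j = i then x else (SOME y. y \<in> RPT n m j bs))"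
  have "\<forall>j\<in>{1..n}. \<theta> j \<in> RPT n m j bs"
  proof
    fix j assume "j \<in> {1..n}"
    have "RPT n m j bs \<noteq> {}" using RPT_ne[OF n m v] .
    then have "(SOME y. y \<in> RPT n m j bs) \<in> RPT n m j bs" by (meson ex_in_conv someI_ex)
    then show "\<theta> j \<in> RPT n m j bs" using x by (simp add: \<theta>_def)
  qed
  moreover have "\<theta> i = x" by (simp add: \<theta>_def)
  ultimately show ?thesis using impl[OF n m v F] by blast
qed

lemma truthful:
  assumes n: "n \<ge> 2" and m: "m \<ge> 2" and t: "strats n m t" and c: "cons_bs n m t bt"
    and i: "i \<in> {1..n}" and vv: "v \<in> {1..m}" and u: "unconditional (\<lambda>_. {1..m}) (Gstar n m) i v (t i)"
  shows "\<forall>k\<le>length bt. v \<in> RPT n m i (take k bt)"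
proof (intro allI impI)
  fix k show "k \<le> length bt \<Longrightarrow> v \<in> RPT n m i (take k bt)"
  proof (induction k)
    case 0 then show ?case using vv by (simp only: take_0 report_ghist_Nil)
  next
    case (Suc k)
    have n1: "n \<ge> 1" using n by simp
    have k: "k < length bt" using Suc by simp
    have v: "gvalid n m bt" using c by (simp add: cons_bs_def)
    have vk: "gvalid n m (take k bt)" using gvalid_take[OF v] .
    obtain p A ys off where L: "st n m (take k bt) = Lev p A ys off"
      using Lev_inj[OF n1 v k] by (cases "st n m (take k bt)") (auto simp: isLev_def)
    have IH: "v \<in> RPT n m i (take k bt)" using Suc by simp
    show ?case
    proof (cases "i = A ! length ys")
      case True
      have "ghist n m (take k bt) \<in> dnodes (Gstar n m) i"
        unfolding dnodes_iff[OF n1] using vk L True by blast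
      then have "v \<in> t i (ghist n m (take k bt))" using u IH unfolding unconditional_def by blast
      moreover have "act m p (bt ! k) = t i (ghist n m (take k bt))"
        using cons_act[OF n m t c k L] True by simp
      ultimately show ?thesis using RPT_snoc_take[OF n1 k L, of i] True by simp
    next
      case False
      then show ?thesis using RPT_snoc_take[OF n1 k L, of i] IH by simp
    qed
  qed
qed

lemma truthful_dec:
  assumes n: "n \<ge> 2" and m: "m \<ge> 2" and t: "strats n m t" and c: "cons_bs n m t bt"
    and tr: "\<forall>k\<le>length bt. v \<in> RPT n m i (take k bt)"
    and k: "k < length bt" and L: "st n m (take k bt) = Lev p A ys off" and i: "A ! length ys = i"
  shows "bt ! k \<longleftrightarrow> p < v"
proof -
  have n1: "n \<ge> 1" using n by simp
  have v: "gvalid n m bt" using c by (simp add: cons_bs_def)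
  have vk: "gvalid n m (take k bt)" using gvalid_take[OF v] .
  have I: "linv n m (take k bt) p A ys off" using linv[OF n m vk L] .
  have l: "length ys < length A" using I unfolding linv_def by blast
  have "\<forall>kk<length A. RPT n m (A ! kk) (take k bt) = (if kk < length ys then act m p (ys ! kk) else {p..m})"
    using I unfolding linv_def by blast
  then have r0: "RPT n m i (take k bt) = {p..m}" using l i by auto
  have r1: "RPT n m i (take (Suc k) bt) = act m p (bt ! k)" using RPT_snoc_take[OF n1 k L, of i] i by simp
  have "v \<in> RPT n m i (take k bt)" "v \<in> RPT n m i (take (Suc k) bt)" using tr k by auto
  then show ?thesis using r0 r1 by (cases "bt ! k") (auto simp: act_def)
qed

lemma diverge:
  assumes n: "n \<ge> 1" and v1: "gvalid n m b1" and v2: "gvalid n m b2"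
    and f1: "\<not> isLev (st n m b1)" and f2: "\<not> isLev (st n m b2)" and ne: "b1 \<noteq> b2"
  shows "\<exists>k. k < length b1 \<and> k < length b2 \<and> take k b1 = take k b2 \<and> b1 ! k \<noteq> b2 ! k"
proof (cases "\<exists>k. k < length b1 \<and> k < length b2 \<and> b1 ! k \<noteq> b2 ! k")
  case True
  define k where "k = (LEAST k. k < length b1 \<and> k < length b2 \<and> b1 ! k \<noteq> b2 ! k)"
  have P: "k < length b1 \<and> k < length b2 \<and> b1 ! k \<noteq> b2 ! k"
    unfolding k_def using True by (rule LeastI_ex)
  have "\<forall>j<k. b1 ! j = b2 ! j"
  proof (intro allI impI)
    fix j assume "j < k"
    then have "\<not> (j < length b1 \<and> j < length b2 \<and> b1 ! j \<noteq> b2 ! j)" unfolding k_def using not_less_Least by blast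
    then show "b1 ! j = b2 ! j" using P \<open>j < k\<close> by auto
  qed
  then have "take k b1 = take k b2" using P by (intro nth_equalityI) auto
  then show ?thesis using P by blast
next
  case False
  then have eqn: "\<forall>k. k < length b1 \<longrightarrow> k < length b2 \<longrightarrow> b1 ! k = b2 ! k" by blast
  show ?thesis
  proof (cases "length b1 \<le> length b2")
    case True
    have e: "b1 = take (length b1) b2" using eqn True by (intro nth_equalityI) auto
    show ?thesis
    proof (cases "length b1 < length b2")
      case True
      then have "isLev (st n m (take (length b1) b2))" using Lev_inj[OF n v2] by blast
      then show ?thesis using e f1 by simp
    next
      case False then show ?thesis using e ne \<open>length b1 \<le> length b2\<close> by simp
    qed
  next
    case False
    have e: "b2 = take (length b2) b1" using eqn False by (intro nth_equalityI) auto
    have "isLev (st n m (take (length b2) b1))" using Lev_inj[OF n v1] False by simp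
    then show ?thesis using e f2 by simp
  qed
qed

lemma nstay_le1:
  assumes "\<forall>r<length Z. Z ! r \<longrightarrow> r = r0"
  shows "nstay Z \<le> 1"
proof -
  have "{r. r < length Z \<and> id (Z ! r)} \<subseteq> {r0}" using assms by auto
  then have "card {r. r < length Z \<and> id (Z ! r)} \<le> 1"
    by (metis card.empty card_insert_disjoint card_mono finite.emptyI finite.insertI empty_iff One_nat_def)
  then show ?thesis by (simp add: nstay_def length_filter_conv_card)
qed

lemma nstay_0:
  assumes "\<forall>r<length Z. \<not> Z ! r"
  shows "nstay Z = 0"
proof -
  have "{r. r < length Z \<and> id (Z ! r)} = {}" using assms by auto
  then show ?thesis by (simp add: nstay_def length_filter_conv_card)
qed

lemma IC_main:
  assumes n: "n \<ge> 2" and m: "m \<ge> 2" and i: "i \<in> {1..n}" and vv: "v \<in> {1..m}"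
    and sth: "strategy (Gstar n m) i s\<theta>" and u: "unconditional (\<lambda>_. {1..m}) (Gstar n m) i v s\<theta>"
    and ssi: "strategy (Gstar n m) i si" and s: "\<forall>j\<in>{1..n}. strategy (Gstar n m) j (s j)"
  shows "auction_pref i v (play (Gstar n m) (s(i := s\<theta>))) (play (Gstar n m) (s(i := si)))"
proof -
  have n1: "n \<ge> 1" using n by simp
  define t where "t = s(i := s\<theta>)"
  define d where "d = s(i := si)"
  have stt: "strats n m t" using s sth by (auto simp: strats_def t_def)
  have std: "strats n m d" using s ssi by (auto simp: strats_def d_def)
  obtain bt where ct: "cons_bs n m t bt" and ft: "\<not> isLev (st n m bt)" using cons_exists[OF n m] by blast
  obtain Wt qt where Ft: "st n m bt = Fin Wt qt" using ft by (cases "st n m bt") (auto simp: isLev_def)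
  obtain bd where cd: "cons_bs n m d bd" and fd: "\<not> isLev (st n m bd)" using cons_exists[OF n m] by blast
  obtain Wd qd where Fd: "st n m bd = Fin Wd qd" using fd by (cases "st n m bd") (auto simp: isLev_def)
  have pt: "play (Gstar n m) t = (Wt, qt)" using play_eq[OF n m stt ct Ft] .
  have pd: "play (Gstar n m) d = (Wd, qd)" using play_eq[OF n m std cd Fd] .
  have vt: "gvalid n m bt" using ct by (simp add: cons_bs_def)
  have vd: "gvalid n m bd" using cd by (simp add: cons_bs_def)
  have ti: "t i = s\<theta>" by (simp add: t_def)
  have tr: "\<forall>k\<le>length bt. v \<in> RPT n m i (take k bt)"
    using truthful[OF n m stt ct i vv] u ti by simp
  have vbt: "v \<in> RPT n m i bt" using tr by (metis order_refl take_all)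
  obtain \<theta> where th: "\<theta> i = v" "(Wt, qt) = second_price n \<theta>"
    using outcome_reports[OF n m vt Ft vbt] by blast
  define ut where "ut = pmf Wt i * (real v - real qt)"
  define ud where "ud = pmf Wd i * (real v - real qd)"
  have ut0: "0 \<le> ut" using payoff_nonneg[OF n, of \<theta> i] th unfolding ut_def
    by (metis fst_conv snd_conv)
  have "ud \<le> ut"
  proof (cases "bt = bd")
    case True
    then show ?thesis using Ft Fd by (simp add: ut_def ud_def)
  next
    case False
    obtain k0 where k0: "k0 < length bt" "k0 < length bd" "take k0 bt = take k0 bd" "bt ! k0 \<noteq> bd ! k0"
      using diverge[OF n1 vt vd ft fd False] by blast
    define c where "c = take k0 bt"
    have cd': "take k0 bd = c" using k0 c_def by simp
    have vc: "gvalid n m c" using gvalid_take[OF vt] c_def by simp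
    obtain p A ys off where L: "st n m c = Lev p A ys off"
      using Lev_inj[OF n1 vt k0(1)] c_def by (cases "st n m c") (auto simp: isLev_def)
    have Ld: "st n m (take k0 bd) = Lev p A ys off" using L cd' by simp
    have Lt: "st n m (take k0 bt) = Lev p A ys off" using L c_def by simp
    have I: "linv n m c p A ys off" using linv[OF n m vc L] .
    have dA: "distinct A" "length ys < length A" "2 \<le> length A" "set A \<subseteq> {1..n}" "p < m" "1 \<le> p"
      "off + length ys = k0"
      using I c_def k0 unfolding linv_def by auto
    have btk: "bt ! k0 = dec n m t c" using ct k0 c_def by (simp add: cons_bs_def)
    have bdk: "bd ! k0 = dec n m d c" using cd k0 cd' by (simp add: cons_bs_def)
    have j0: "A ! length ys = i"
    proof (rule ccontr)
      assume ne: "A ! length ys \<noteq> i"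
      then have "t (A ! length ys) = d (A ! length ys)" by (simp add: t_def d_def)
      then have "dec n m t c = dec n m d c" by (simp add: dec_def L)
      then show False using btk bdk k0(4) by simp
    qed
    have btp: "bt ! k0 \<longleftrightarrow> p < v" using truthful_dec[OF n m stt ct tr k0(1) Lt j0] .
    have bdp: "bd ! k0 \<longleftrightarrow> \<not> p < v" using btp k0(4) by auto
    obtain x where x: "x \<in> RPT n m i bd" using RPT_ne[OF n m vd] by blast
    obtain \<theta>' where th': "\<forall>j\<in>{1..n}. \<theta>' j \<in> RPT n m j bd" "(Wd, qd) = second_price n \<theta>'"
      using outcome_reports[OF n m vd Fd x] by blast
    have geA: "p \<le> \<theta>' j" if j: "j \<in> set A" for j
    proof -
      have "RPT n m j bd \<subseteq> RPT n m j (take k0 bd)"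
        using RPT_mono[OF n m vd, of k0 "length bd"] k0 by simp
      also have "\<dots> \<subseteq> {p..m}" using RPT_Lev_sub[OF n m vc L j] cd' by simp
      finally have sub: "RPT n m j bd \<subseteq> {p..m}" .
      have "j \<in> {1..n}" using j dA(4) by blast
      then have "\<theta>' j \<in> RPT n m j bd" using th'(1) by blast
      then show ?thesis using sub by auto
    qed
    have lA: "0 < length A" "1 < length A" using dA(3) by auto
    have A01: "A ! 0 \<in> set A" "A ! 1 \<in> set A" "A ! 0 \<noteq> A ! 1"
      using nth_mem[OF lA(1)] nth_mem[OF lA(2)] nth_eq_iff_index_eq[OF dA(1) lA] by auto
    have qdp: "p \<le> qd"
    proof -
      have "p \<le> rev (sort (map \<theta>' [1..<Suc n])) ! 1"
        using sec_ge[of "A ! 0" n "A ! 1" p \<theta>'] A01 dA(4) geA by blast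
      then show ?thesis using th'(2) by (simp add: second_price_def)
    qed
    have pmf0: "0 \<le> pmf Wd i" "pmf Wd i \<le> 1" by (simp_all add: pmf_le_1)
    show ?thesis
    proof (cases "p < v")
      case False
      then have "real v - real qd \<le> 0" using qdp by simp
      then have "ud \<le> 0" unfolding ud_def using pmf0 by (simp add: mult_nonneg_nonpos)
      then show ?thesis using ut0 by simp
    next
      case pv: True
      show ?thesis
      proof (cases "pmf Wd i = 0")
        case True then show ?thesis using ut0 by (simp add: ud_def)
      next
        case pnz: False
        have win: "\<theta>' i = Max (\<theta>' ` {1..n})" using sp_win[OF n, of \<theta>' i] pnz th'(2)
          by (metis fst_conv)
        have "RPT n m i bd \<subseteq> RPT n m i (take (Suc k0) bd)"
          using RPT_mono[OF n m vd, of "Suc k0" "length bd"] k0 by simp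
        also have "\<dots> = act m p (bd ! k0)" using RPT_snoc_take[OF n1 k0(2) Ld, of i] j0 by simp
        also have "\<dots> = {p}" using bdp pv by (simp add: act_def)
        finally have sub: "RPT n m i bd \<subseteq> {p}" .
        have "\<theta>' i \<in> RPT n m i bd" using th'(1) i by blast
        then have tip: "\<theta>' i = p" using sub by auto
        have leP: "\<forall>j\<in>{1..n}. \<theta>' j \<le> p" using win tip by auto
        have ud1: "ud \<le> real v - real p"
        proof -
          have "ud \<le> pmf Wd i * (real v - real p)" unfolding ud_def using qdp pmf0
            by (intro mult_left_mono) auto
          also have "\<dots> \<le> 1 * (real v - real p)" using pmf0 pv by (intro mult_right_mono) auto
          finally show ?thesis by simp
        qed
        define e where "e = off + length A"
        note LTd = level_through[OF n m vd _ Ld fd] and LTt = level_through[OF n m vt _ Lt ft]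
        have ed: "e \<le> length bd" using LTd(1) k0 e_def by simp
        have et: "e \<le> length bt" using LTt(1) k0 e_def by simp
        have offk: "off \<le> k0" using dA(7) by simp
        have mover: "A ! (k' - off) \<in> {1..n}" if "off \<le> k'" "k' < e" for k'
        proof -
          have "k' - off < length A" using that e_def by simp
          then show ?thesis using dA(4) nth_mem by blast
        qed
        have bdF: "\<not> bd ! k'" if k': "off \<le> k'" "k' < e" for k'
        proof
          assume bk: "bd ! k'"
          have sk: "st n m (take k' bd) = Lev p A (take (k' - off) (drop off bd)) off"
            using LTd(2)[of k'] k0 k' e_def by simp
          have lk: "length (take (k' - off) (drop off bd)) = k' - off" using k' ed by simp
          have kb: "k' < length bd" using k' ed by simp
          have "RPT n m (A ! (k' - off)) bd \<subseteq> RPT n m (A ! (k' - off)) (take (Suc k') bd)"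
            using RPT_mono[OF n m vd, of "Suc k'" "length bd"] kb by simp
          also have "\<dots> = act m p (bd ! k')" using RPT_snoc_take[OF n1 kb sk, of "A ! (k' - off)"] lk by simp
          also have "\<dots> = {p<..m}" using bk by (simp add: act_def)
          finally have sub: "RPT n m (A ! (k' - off)) bd \<subseteq> {p<..m}" .
          have "\<theta>' (A ! (k' - off)) \<in> RPT n m (A ! (k' - off)) bd" using th'(1) mover[OF k'] by blast
          then have "p < \<theta>' (A ! (k' - off))" using sub by auto
          moreover have "\<theta>' (A ! (k' - off)) \<le> p" using leP mover[OF k'] by blast
          ultimately show False by simp
        qed
        have btT: "\<forall>k'. off \<le> k' \<longrightarrow> k' < e \<longrightarrow> (bt ! k' \<longleftrightarrow> k' = k0)"
        proof (intro allI)
          fix k' show "off \<le> k' \<longrightarrow> k' < e \<longrightarrow> (bt ! k' \<longleftrightarrow> k' = k0)"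
          proof (induction k' rule: less_induct)
            case (less k')
            show ?case
            proof (intro impI)
              assume k': "off \<le> k'" "k' < e"
              consider "k' < k0" | "k' = k0" | "k0 < k'" by linarith
              then show "bt ! k' \<longleftrightarrow> k' = k0"
              proof cases
                case 1
                then have "bt ! k' = bd ! k'" using k0(3) by (metis nth_take)
                then show ?thesis using bdF[OF k'] 1 by simp
              next
                case 2 then show ?thesis using btp pv by simp
              next
                case 3
                define jj where "jj = A ! (k' - off)"
                have kbt: "k' < length bt" and kbd: "k' < length bd" using k' et ed by auto
                have jjN: "jj \<in> {1..n}" using mover[OF k'] jj_def by simp
                have ki: "k' - off < length A" "length ys < length A" using k' e_def dA by auto
                have jji: "jj \<noteq> i"
                proof
                  assume "jj = i"
                  then have "A ! (k' - off) = A ! length ys" using j0 jj_def by simp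
                  then have "k' - off = length ys" using nth_eq_iff_index_eq[OF dA(1) ki] by simp
                  then show False using 3 dA(7) by simp
                qed
                define Yt where "Yt = take (k' - off) (drop off bt)"
                define Yd where "Yd = take (k' - off) (drop off bd)"
                have skt: "st n m (take k' bt) = Lev p A Yt off" using LTt(2)[of k'] k0 k' e_def Yt_def by simp
                have skd: "st n m (take k' bd) = Lev p A Yd off" using LTd(2)[of k'] k0 k' e_def Yd_def by simp
                have lYt: "length Yt = k' - off" and lYd: "length Yd = k' - off" using kbt kbd k' Yt_def Yd_def by auto
                have vkt: "gvalid n m (take k' bt)" and vkd: "gvalid n m (take k' bd)"
                  using gvalid_take[OF vt] gvalid_take[OF vd] by auto
                have hd: "ghist n m (take k' bd) \<in> dnodes (Gstar n m) jj"
                  unfolding dnodes_iff[OF n1] using vkd skd lYd jj_def by auto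
                have inf: "info (Gstar n m) jj (ghist n m (take k' bd)) = ghist n m ` iset n m (take k' bd) jj p off"
                  using info_ghist[OF n1 vkd skd] .
                have tofft: "take off (take k' bt) = take off (take k' bd)"
                proof -
                  have "take off (take k' bt) = take off bt" using k' by (simp add: min_def)
                  also have "\<dots> = take off (take k0 bt)" using offk by (simp add: min_def)
                  also have "\<dots> = take off (take k0 bd)" using k0(3) by simp
                  also have "\<dots> = take off (take k' bd)" using offk 3 by (simp add: min_def)
                  finally show ?thesis .
                qed
                have dYd: "drop off (take k' bd) = Yd" using Yd_def k' by (simp add: take_drop)
                have dYt: "drop off (take k' bt) = Yt" using Yt_def k' by (simp add: take_drop)
                have nsd: "nstay Yd = 0"
                proof (rule nstay_0, intro allI impI)
                  fix r assume "r < length Yd"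
                  then have r: "off + r < e" "off \<le> off + r" using lYd k' by auto
                  have "Yd ! r = bd ! (off + r)" using \<open>r < length Yd\<close> lYd Yd_def kbd by simp
                  then show "\<not> Yd ! r" using bdF[OF r(2) r(1)] by simp
                qed
                have nst: "nstay Yt \<le> 1"
                proof (rule nstay_le1[of _ "k0 - off"], intro allI impI)
                  fix r assume r: "r < length Yt" "Yt ! r"
                  have "Yt ! r = bt ! (off + r)" using r lYt Yt_def kbt by simp
                  moreover have "off + r < k'" using r lYt k' by simp
                  ultimately have "off + r = k0" using less[of "off + r"] r k' by auto
                  then show "r = k0 - off" by simp
                qed
                have mem: "take k' bt \<in> iset n m (take k' bd) jj p off"
                  unfolding iset_def using vkt skt lYt lYd tofft dYd dYt nsd nst jj_def
                  by (simp add: gst_st[OF n1])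
                have "ghist n m (take k' bt) \<in> info (Gstar n m) jj (ghist n m (take k' bd))"
                  using inf mem by simp
                then have eqs: "s jj (ghist n m (take k' bt)) = s jj (ghist n m (take k' bd))"
                  using s jjN hd unfolding strategy_def by blast
                have "bt ! k' = dec n m t (take k' bt)" using ct kbt by (simp add: cons_bs_def)
                also have "\<dots> = (s jj (ghist n m (take k' bt)) = {p<..m})"
                  using skt lYt jji jj_def by (simp add: dec_def t_def)
                also have "\<dots> = (s jj (ghist n m (take k' bd)) = {p<..m})" using eqs by simp
                also have "\<dots> = dec n m d (take k' bd)"
                  using skd lYd jji jj_def by (simp add: dec_def d_def)
                also have "\<dots> = bd ! k'" using cd kbd by (simp add: cons_bs_def)
                finally have "bt ! k' = bd ! k'" .
                then show ?thesis using bdF[OF k'] 3 by simp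
              qed
            qed
          qed
        qed
        define Y where "Y = take (length A) (drop off bt)"
        have lY: "length Y = length A" using et e_def Y_def by simp
        have Ynth: "\<forall>r<length Y. Y ! r \<longleftrightarrow> r = k0 - off"
        proof (intro allI impI)
          fix r assume r: "r < length Y"
          have "Y ! r = bt ! (off + r)" using r lY Y_def et e_def by simp
          moreover have "off + r < e" "off \<le> off + r" using r lY e_def by auto
          ultimately show "Y ! r \<longleftrightarrow> r = k0 - off" using btT offk by auto
        qed
        have Yne: "Y \<noteq> []" using lY lA by auto
        have tb: "take e bt = take off bt @ Y" using e_def Y_def by (simp add: take_add)
        have r0: "k0 - off < length A" using dA by simp
        have S1: "map fst (filter snd (zip A Y)) = [i]"
        proof -
          have "k0 - off = length ys" using dA(7) by simp
          then show ?thesis using stayers_single[OF lY r0 Ynth] j0 by simp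
        qed
        have "st n m (take e bt) = foldl (stp m) (Lev p A [] off) Y"
          using tb LTt(4) k0 by (simp add: st_append)
        also have "\<dots> = stp m (foldl (stp m) (Lev p A [] off) (butlast Y)) (last Y)"
          using Yne by (metis append_butlast_last_id foldl_Cons foldl_Nil foldl_append)
        also have "\<dots> = stp m (Lev p A (butlast Y) off) (last Y)"
          using lY Yne lA by (subst foldl_lev) auto
        also have "\<dots> = Fin (return_pmf i) p"
          using lY Yne S1 by (simp add: Let_def append_butlast_last_id)
        finally have Fe: "st n m (take e bt) = Fin (return_pmf i) p" .
        have "e = length bt"
        proof (rule ccontr)
          assume "e \<noteq> length bt"
          then have "e < length bt" using et by simp
          then have "isLev (st n m (take e bt))" using Lev_inj[OF n1 vt] by blast
          then show False using Fe by (simp add: isLev_def)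
        qed
        then have "Wt = return_pmf i" "qt = p" using Fe Ft by auto
        then have "ut = real v - real p" by (simp add: ut_def)
        then show ?thesis using ud1 by simp
      qed
    qed
  qed
  then show ?thesis unfolding auction_pref_def t_def[symmetric] d_def[symmetric] pt pd ut_def ud_def by simp
qed

theorem proposition9:
  fixes n m :: nat
  assumes "n \<ge> 2" and "m \<ge> 2"
  shows "gradual_mechanism (\<lambda>_. {1..m}) {1..n} (second_price n) (Gstar n m) \<and>
         incentive_compatible (\<lambda>_. {1..m}) {1..n} auction_pref (Gstar n m)"
proof
  show "gradual_mechanism (\<lambda>_. {1..m}) {1..n} (second_price n) (Gstar n m)"
    unfolding gradual_mechanism_def
    using ef[OF assms] gradual_G[OF assms] implements_G[OF assms] by blast
  show "incentive_compatible (\<lambda>_. {1..m}) {1..n} auction_pref (Gstar n m)"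
    unfolding incentive_compatible_def
    using IC_main[OF assms] by blast
qed

end
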